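(* Let $\mathbb{F}$ be a field of characteristic $2$ with at least $4$ elements, let $k\geq 2$ be an integer, and let $B\in M_{4k}(\mathbb{F})$ be a non-derogative matrix. Let $a\in\mathbb{F}$ with $a\neq 0,1$. (a) If $\operatorname{Trace}(B)=c\neq 0$, then there exist $N,D\in M_{4k}(\mathbb{F})$ with $B=N+D$, $N^2=0$, and $D$ diagonalizable with every eigenvalue in $\{0,\ c,\ ca,\ c(a+1)\}$. (b) If $\operatorname{Trace}(B)=0$, then there exist $N,D\in M_{4k}(\mathbb{F})$ with $B=N+D$, $N^2=0$, and $D$ diagonalizable with every eigenvalue in $\{0,1,a,a+1\}$.
   Context: A square matrix is non-derogative if its minimal polynomial equals its characteristic polynomial. A matrix $D\in M_n(\mathbb{F})$ is diagonalizable if there exists an invertible $U\in M_n(\mathbb{F})$ such that $U^{-1}DU$ is diagonal. *)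

theory Defs
  imports "Jordan_Normal_Form.Matrix" "Jordan_Normal_Form.Char_Poly"
begin

definition mat_trace :: "'a::comm_ring_1 mat \<Rightarrow> 'a" where
  "mat_trace A = (\<Sum>i<dim_row A. A $$ (i,i))"

definition poly_mat_eval :: "'a::comm_ring_1 poly \<Rightarrow> 'a mat \<Rightarrow> 'a mat" where
  "poly_mat_eval p A = mat (dim_row A) (dim_row A)
     (\<lambda>(i,j). \<Sum>k\<le>degree p. coeff p k * (A ^\<^sub>m k) $$ (i,j))"

definition is_minimal_poly :: "'a::field mat \<Rightarrow> 'a poly \<Rightarrow> bool" where
  "is_minimal_poly A p \<longleftrightarrow>
     monic p \<and> poly_mat_eval p A = 0\<^sub>m (dim_row A) (dim_row A) \<and>
     (\<forall>q. q \<noteq> 0 \<and> poly_mat_eval q A = 0\<^sub>m (dim_row A) (dim_row A) \<longrightarrow> degree p \<le> degree q)"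

definition minimal_poly :: "'a::field mat \<Rightarrow> 'a poly" where
  "minimal_poly A = (THE p. is_minimal_poly A p)"

definition non_derogative :: "'a::field mat \<Rightarrow> bool" where
  "non_derogative A \<longleftrightarrow> minimal_poly A = char_poly A"

definition diagonalizable :: "'a::field mat \<Rightarrow> bool" where
  "diagonalizable D \<longleftrightarrow> (\<exists>U V. U \<in> carrier_mat (dim_row D) (dim_row D) \<and>
      V \<in> carrier_mat (dim_row D) (dim_row D) \<and>
      U * V = 1\<^sub>m (dim_row D) \<and> V * U = 1\<^sub>m (dim_row D) \<and> diagonal_mat (V * D * U))"

end

theory Submission
  imports Defs
begin

primrec hev :: "'a::comm_ring_1 mat \<Rightarrow> 'a list \<Rightarrow> 'a mat" where
  "hev A [] = 0\<^sub>m (dim_row A) (dim_row A)"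
| "hev A (c # cs) = c \<cdot>\<^sub>m 1\<^sub>m (dim_row A) + hev A cs * A"

definition mev :: "'a::comm_ring_1 poly \<Rightarrow> 'a mat \<Rightarrow> 'a mat" where
  "mev p A = hev A (coeffs p)"

lemma hev_carrier: "A \<in> carrier_mat n n \<Longrightarrow> hev A cs \<in> carrier_mat n n"
  by (induct cs) auto

lemma mev_carrier[simp]: "A \<in> carrier_mat n n \<Longrightarrow> mev p A \<in> carrier_mat n n"
  unfolding mev_def by (rule hev_carrier)

lemma mev_dim[simp]: "A \<in> carrier_mat n n \<Longrightarrow> dim_row (mev p A) = n"
  "A \<in> carrier_mat n n \<Longrightarrow> dim_col (mev p A) = n"
  using mev_carrier[of A n p] unfolding carrier_mat_def by auto

lemma mev_0[simp]: "A \<in> carrier_mat n n \<Longrightarrow> mev 0 A = 0\<^sub>m n n"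
  unfolding mev_def by auto

lemma mev_pCons: assumes A: "A \<in> carrier_mat n n"
  shows "mev (pCons a p) A = a \<cdot>\<^sub>m 1\<^sub>m n + mev p A * A"
proof (cases "a = 0 \<and> p = 0")
  case True
  then show ?thesis using A by (auto simp: mev_def)
next
  case False
  then have "coeffs (pCons a p) = a # coeffs p"
    by (auto simp: coeffs_pCons_eq_cCons cCons_def)
  then show ?thesis using A unfolding mev_def by auto
qed

lemma mev_const: assumes A: "A \<in> carrier_mat n n"
  shows "mev [:a:] A = a \<cdot>\<^sub>m 1\<^sub>m n"
  using mev_pCons[OF A, of a 0] A by simp

lemma mev_comm: assumes A: "A \<in> carrier_mat n n"
  shows "mev p A * A = A * mev p A"
proof (induct p rule: pCons_induct)
  case 0 then show ?case using A by simp
next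
  case (pCons a p)
  have M: "mev p A \<in> carrier_mat n n" using A by simp
  have MA: "mev p A * A \<in> carrier_mat n n" using mult_carrier_mat[OF M A] .
  have I: "a \<cdot>\<^sub>m 1\<^sub>m n \<in> carrier_mat n n" by simp
  have "mev (pCons a p) A * A = (a \<cdot>\<^sub>m 1\<^sub>m n + mev p A * A) * A" using mev_pCons[OF A] by simp
  also have "\<dots> = a \<cdot>\<^sub>m 1\<^sub>m n * A + mev p A * A * A"
    by (rule add_mult_distrib_mat[OF I MA A])
  also have "a \<cdot>\<^sub>m 1\<^sub>m n * A = A * (a \<cdot>\<^sub>m 1\<^sub>m n)" using A
    by (simp add: mult_smult_assoc_mat[OF one_carrier_mat A] mult_smult_distrib[OF A one_carrier_mat]
       left_mult_one_mat[OF A] right_mult_one_mat[OF A])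
  also have "mev p A * A * A = A * (mev p A * A)"
    by (metis pCons(2) assoc_mult_mat[OF A M A])
  also have "A * (a \<cdot>\<^sub>m 1\<^sub>m n) + A * (mev p A * A) = A * (a \<cdot>\<^sub>m 1\<^sub>m n + mev p A * A)"
    by (rule mult_add_distrib_mat[OF A I MA, symmetric])
  finally show ?case using mev_pCons[OF A] by simp
qed

lemma mev_add: assumes A: "A \<in> carrier_mat n n"
  shows "mev (p + q) A = mev p A + mev q A"
proof (induct p arbitrary: q rule: pCons_induct)
  case 0 then show ?case using A by simp
next
  case (pCons a p)
  obtain b q' where q: "q = pCons b q'" by (cases q)
  have M: "mev p A \<in> carrier_mat n n" "mev q' A \<in> carrier_mat n n" using A by auto
  have "mev (pCons a p + q) A = mev (pCons (a+b) (p + q')) A" using q by simp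
  also have "\<dots> = (a+b) \<cdot>\<^sub>m 1\<^sub>m n + (mev p A + mev q' A) * A"
    using mev_pCons[OF A] pCons by simp
  also have "(mev p A + mev q' A) * A = mev p A * A + mev q' A * A"
    by (rule add_mult_distrib_mat[OF M A])
  also have "(a+b) \<cdot>\<^sub>m 1\<^sub>m n + (mev p A * A + mev q' A * A) = (a \<cdot>\<^sub>m 1\<^sub>m n + mev p A * A) + (b \<cdot>\<^sub>m 1\<^sub>m n + mev q' A * A)"
    using A M by (intro eq_matI) (auto simp: algebra_simps)
  finally show ?case using mev_pCons[OF A] q by simp
qed

lemma mev_pCons0: assumes A: "A \<in> carrier_mat n n"
  shows "mev (pCons 0 p) A = mev p A * A"
proof -
  have "mev p A * A \<in> carrier_mat n n" using mult_carrier_mat[OF mev_carrier[OF A] A] .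
  then show ?thesis using mev_pCons[OF A, of 0 p] A by (intro eq_matI) (auto simp: mev_dim[OF A])
qed

lemma mev_smult: assumes A: "A \<in> carrier_mat n n"
  shows "mev (Polynomial.smult c p) A = c \<cdot>\<^sub>m mev p A"
proof (induct p rule: pCons_induct)
  case 0 then show ?case using A by (intro eq_matI) auto
next
  case (pCons a p)
  have M: "mev p A \<in> carrier_mat n n" using A by simp
  have MA: "mev p A * A \<in> carrier_mat n n" using mult_carrier_mat[OF M A] .
  have "mev (Polynomial.smult c (pCons a p)) A = (c*a) \<cdot>\<^sub>m 1\<^sub>m n + (c \<cdot>\<^sub>m mev p A) * A"
    using mev_pCons[OF A] pCons by simp
  also have "(c \<cdot>\<^sub>m mev p A) * A = c \<cdot>\<^sub>m (mev p A * A)" by (rule mult_smult_assoc_mat[OF M A])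
  also have "(c*a) \<cdot>\<^sub>m 1\<^sub>m n + c \<cdot>\<^sub>m (mev p A * A) = c \<cdot>\<^sub>m (a \<cdot>\<^sub>m 1\<^sub>m n + mev p A * A)"
    using MA A by (intro eq_matI) (auto simp: algebra_simps mev_dim[OF A])
  finally show ?case using mev_pCons[OF A] by simp
qed

lemma mev_mult: assumes A: "A \<in> carrier_mat n n"
  shows "mev (p * q) A = mev p A * mev q A"
proof (induct p rule: pCons_induct)
  case 0 then show ?case using A by (intro eq_matI) auto
next
  case (pCons a p)
  have M: "mev p A \<in> carrier_mat n n" and Q: "mev q A \<in> carrier_mat n n" using A by auto
  have MA: "mev p A * A \<in> carrier_mat n n" using mult_carrier_mat[OF M A] .
  have I: "a \<cdot>\<^sub>m 1\<^sub>m n \<in> carrier_mat n n" by simp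
  have "mev (pCons a p * q) A = mev (Polynomial.smult a q + pCons 0 (p * q)) A" by simp
  also have "\<dots> = a \<cdot>\<^sub>m mev q A + mev p A * mev q A * A"
    using mev_add[OF A] mev_smult[OF A] mev_pCons0[OF A] pCons by simp
  also have "mev p A * mev q A * A = mev p A * A * mev q A"
    by (metis mev_comm[OF A] assoc_mult_mat[OF M Q A] assoc_mult_mat[OF M A Q])
  also have "a \<cdot>\<^sub>m mev q A = a \<cdot>\<^sub>m 1\<^sub>m n * mev q A"
    using Q by (simp add: mult_smult_assoc_mat[OF one_carrier_mat Q] left_mult_one_mat[OF Q])
  also have "a \<cdot>\<^sub>m 1\<^sub>m n * mev q A + mev p A * A * mev q A = (a \<cdot>\<^sub>m 1\<^sub>m n + mev p A * A) * mev q A"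
    by (rule add_mult_distrib_mat[OF I MA Q, symmetric])
  finally show ?case using mev_pCons[OF A] by simp
qed

lemma mev_mult_comm: assumes A: "A \<in> carrier_mat n n"
  shows "mev p A * mev q A = mev q A * mev p A"
  using mev_mult[OF A, of p q] mev_mult[OF A, of q p] by (simp add: mult.commute)

lemma mev_X: assumes A: "A \<in> carrier_mat n n"
  shows "mev [:0,1:] A = A"
  using mev_pCons[OF A, of 0 "[:1:]"] mev_const[OF A, of 1] A by (intro eq_matI) auto

lemma mev_one: assumes A: "A \<in> carrier_mat n n"
  shows "mev 1 A = 1\<^sub>m n"
  using mev_const[OF A, of 1] by (simp add: one_pCons) (intro eq_matI, auto)

lemma mev_diff: assumes A: "A \<in> carrier_mat n n"
  shows "mev (p - q) A = mev p A - mev q A"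
proof -
  have "mev p A = mev (p - q) A + mev q A" using mev_add[OF A, of "p - q" q] by simp
  then show ?thesis using A by (intro eq_matI) auto
qed

lemma pow_mat_Suc_entry: assumes A: "A \<in> carrier_mat n n" and i: "i < n" and j: "j < n"
  shows "(A ^\<^sub>m Suc k) $$ (i,j) = (\<Sum>l<n. (A ^\<^sub>m k) $$ (i,l) * A $$ (l,j))"
  using A i j by (auto simp: scalar_prod_def lessThan_atLeast0)

lemma mev_entry: assumes A: "A \<in> carrier_mat n n" and i: "i < n" and j: "j < n"
  shows "mev p A $$ (i,j) = (\<Sum>k\<le>degree p. coeff p k * (A ^\<^sub>m k) $$ (i,j))"
  using i j
proof (induct p arbitrary: i j rule: pCons_induct)
  case 0 then show ?case using A by simp
next
  case (pCons a q)
  have "mev (pCons a q) A $$ (i,j) = a * (if i = j then 1 else 0) + (mev q A * A) $$ (i,j)"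
    using mev_pCons[OF A] pCons A by simp
  also have "(mev q A * A) $$ (i,j) = (\<Sum>l<n. mev q A $$ (i,l) * A $$ (l,j))"
    using pCons A by (auto simp: scalar_prod_def lessThan_atLeast0)
  also have "\<dots> = (\<Sum>l<n. (\<Sum>k\<le>degree q. coeff q k * (A ^\<^sub>m k) $$ (i,l)) * A $$ (l,j))"
    using pCons by (intro sum.cong) auto
  also have "\<dots> = (\<Sum>k\<le>degree q. coeff q k * (\<Sum>l<n. (A ^\<^sub>m k) $$ (i,l) * A $$ (l,j)))"
    by (simp add: sum_distrib_right sum_distrib_left mult.assoc sum.swap[of _ "{..<n}"])
  also have "\<dots> = (\<Sum>k\<le>degree q. coeff q k * (A ^\<^sub>m Suc k) $$ (i,j))"
    using pow_mat_Suc_entry[OF A pCons(3,4)] by simp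
  finally have eq: "mev (pCons a q) A $$ (i,j) = a * (if i = j then 1 else 0) + (\<Sum>k\<le>degree q. coeff q k * (A ^\<^sub>m Suc k) $$ (i,j))" .
  show ?case
  proof (cases "q = 0")
    case True
    then show ?thesis using eq A pCons by simp
  next
    case False
    then have "degree (pCons a q) = Suc (degree q)" by simp
    then have "(\<Sum>k\<le>degree (pCons a q). coeff (pCons a q) k * (A ^\<^sub>m k) $$ (i,j)) =
      coeff (pCons a q) 0 * (A ^\<^sub>m 0) $$ (i,j) + (\<Sum>k\<le>degree q. coeff (pCons a q) (Suc k) * (A ^\<^sub>m Suc k) $$ (i,j))"
      by (simp only: sum.atMost_Suc_shift)
    then show ?thesis unfolding eq using A pCons by simp
  qed
qed

lemma mev_poly_mat_eval: assumes A: "A \<in> carrier_mat n n"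
  shows "poly_mat_eval p A = mev p A"
  using A by (intro eq_matI) (auto simp: poly_mat_eval_def mev_entry[OF A])


lemma mat_vec_unit_entry: fixes M :: "'a::comm_ring_1 mat" assumes M: "M \<in> carrier_mat n n" and r: "r < n" and j: "j < n"
  shows "(M *\<^sub>v unit_vec n j) $ r = M $$ (r,j)"
proof -
  have "(M *\<^sub>v unit_vec n j) $ r = row M r \<bullet> unit_vec n j" using M r by simp
  also have "\<dots> = row M r $ j" by (rule scalar_prod_right_unit[OF j])
  also have "\<dots> = M $$ (r,j)" using M r j by simp
  finally show ?thesis .
qed

lemma mat_vec_zero[simp]: "M \<in> carrier_mat nr n \<Longrightarrow> M *\<^sub>v 0\<^sub>v n = 0\<^sub>v nr"
  by (intro eq_vecI) (auto simp: scalar_prod_def)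

lemma mat_eq_by_cols: fixes M :: "'a::comm_ring_1 mat" assumes M: "M \<in> carrier_mat n n" and N: "N \<in> carrier_mat n n"
  and c: "\<And>j. j < n \<Longrightarrow> M *\<^sub>v unit_vec n j = N *\<^sub>v unit_vec n j"
  shows "M = N"
proof (rule eq_matI)
  fix i j assume i: "i < dim_row N" and j: "j < dim_col N"
  then have "i < n" "j < n" using N by auto
  then show "M $$ (i,j) = N $$ (i,j)"
    using c[of j] mat_vec_unit_entry[OF M, of i j] mat_vec_unit_entry[OF N, of i j] by simp
qed (use M N in auto)

lemma det_inv: assumes A: "(A :: 'a :: field mat) \<in> carrier_mat n n" and d: "det A \<noteq> 0"
  shows "\<exists>B. B \<in> carrier_mat n n \<and> A * B = 1\<^sub>m n \<and> B * A = 1\<^sub>m n"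
proof -
  from det_non_zero_imp_unit[OF A d, of "()"]
  obtain B where B: "B \<in> carrier_mat n n" and BA: "B * A = 1\<^sub>m n"
    unfolding Units_def ring_mat_def by auto
  from mat_mult_left_right_inverse[OF B A BA] B BA show ?thesis by auto
qed

lemma sum_deg_extend: fixes p :: "'a::comm_ring_1 poly" assumes "degree p \<le> N"
  shows "(\<Sum>k\<le>degree p. coeff p k * f k) = (\<Sum>k\<le>N. coeff p k * f k)"
  by (rule sum.mono_neutral_left) (use assms in \<open>auto intro!: le_degree\<close>)

lemma mev_vec_entry: assumes A: "A \<in> carrier_mat n n" and v: "v \<in> carrier_vec n" and r: "r < n"
  and N: "degree p \<le> N"
  shows "(mev p A *\<^sub>v v) $ r = (\<Sum>k\<le>N. coeff p k * ((A ^\<^sub>m k) *\<^sub>v v) $ r)"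
proof -
  have "(mev p A *\<^sub>v v) $ r = (\<Sum>l<n. mev p A $$ (r,l) * v $ l)"
    using A v r by (auto simp: scalar_prod_def lessThan_atLeast0)
  also have "\<dots> = (\<Sum>l<n. (\<Sum>k\<le>N. coeff p k * (A ^\<^sub>m k) $$ (r,l)) * v $ l)"
    using mev_entry[OF A r] sum_deg_extend[OF N] by simp
  also have "\<dots> = (\<Sum>k\<le>N. coeff p k * (\<Sum>l<n. (A ^\<^sub>m k) $$ (r,l) * v $ l))"
    by (simp add: sum_distrib_right sum_distrib_left mult.assoc sum.swap[of _ "{..<n}"])
  also have "\<dots> = (\<Sum>k\<le>N. coeff p k * ((A ^\<^sub>m k) *\<^sub>v v) $ r)"
    using A v r by (auto simp: scalar_prod_def lessThan_atLeast0)
  finally show ?thesis .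
qed

lemma local_annihilator: assumes A: "(A :: 'a :: field mat) \<in> carrier_mat n n" and v: "v \<in> carrier_vec n"
  shows "\<exists>g. g \<noteq> 0 \<and> mev g A *\<^sub>v v = 0\<^sub>v n"
proof -
  define K where "K = mat (Suc n) (Suc n) (\<lambda>(r,i). if r < n then ((A ^\<^sub>m i) *\<^sub>v v) $ r else 0)"
  have K: "K \<in> carrier_mat (Suc n) (Suc n)" unfolding K_def by auto
  have "det K = 0"
  proof (rule ccontr)
    assume "det K \<noteq> 0"
    from det_inv[OF K this] obtain B where B: "B \<in> carrier_mat (Suc n) (Suc n)" and KB: "K * B = 1\<^sub>m (Suc n)" by auto
    have "(K * B) $$ (n,n) = 0" using K B by (auto simp: scalar_prod_def K_def)
    then show False using KB by simp
  qed
  from this[unfolded det_0_iff_vec_prod_zero_field[OF K]] obtain c where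
    c: "c \<in> carrier_vec (Suc n)" "c \<noteq> 0\<^sub>v (Suc n)" "K *\<^sub>v c = 0\<^sub>v (Suc n)" by auto
  define g where "g = Poly (map (\<lambda>i. c $ i) [0..<Suc n])"
  have cg: "coeff g k = (if k < Suc n then c $ k else 0)" for k
    unfolding g_def by (simp add: nth_default_def del: upt_Suc)
  have dg: "degree g \<le> n" by (rule degree_le) (auto simp: cg)
  have "g \<noteq> 0"
  proof
    assume "g = 0"
    then have "c $ k = 0" if "k < Suc n" for k using cg[of k] that by simp
    then have "c = 0\<^sub>v (Suc n)" using c by (intro eq_vecI) auto
    then show False using c by simp
  qed
  moreover have "mev g A *\<^sub>v v = 0\<^sub>v n"
  proof (rule eq_vecI)
    fix r assume "r < dim_vec (0\<^sub>v n :: 'a vec)"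
    then have r: "r < n" by simp
    have "(mev g A *\<^sub>v v) $ r = (\<Sum>k\<le>n. coeff g k * ((A ^\<^sub>m k) *\<^sub>v v) $ r)"
      by (rule mev_vec_entry[OF A v r dg])
    also have "\<dots> = (\<Sum>k<Suc n. K $$ (r,k) * c $ k)"
      unfolding lessThan_Suc_atMost by (intro sum.cong refl) (auto simp: cg K_def r mult.commute le_imp_less_Suc less_SucI)
    also have "\<dots> = (K *\<^sub>v c) $ r" using K c(1) r
      by (auto simp: scalar_prod_def lessThan_atLeast0 simp del: sum.lessThan_Suc sum.atLeast0_lessThan_Suc)
    also have "\<dots> = 0\<^sub>v (Suc n) $ r" by (simp only: c(3))
    also have "\<dots> = 0" using r by simp
    finally show "(mev g A *\<^sub>v v) $ r = 0\<^sub>v n $ r" using r by simp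
  qed (use A in auto)
  ultimately show ?thesis by blast
qed

lemma global_annihilator: assumes A: "(A :: 'a :: field mat) \<in> carrier_mat n n"
  shows "\<exists>g. g \<noteq> 0 \<and> mev g A = 0\<^sub>m n n"
proof -
  have "\<forall>j. \<exists>g. j < n \<longrightarrow> g \<noteq> 0 \<and> mev g A *\<^sub>v unit_vec n j = 0\<^sub>v n"
    using local_annihilator[OF A] by auto
  from choice[OF this] obtain g where g0: "\<forall>j. j < n \<longrightarrow> g j \<noteq> 0 \<and> mev (g j) A *\<^sub>v unit_vec n j = 0\<^sub>v n"
    by blast
  then have g: "\<And>j. j < n \<Longrightarrow> g j \<noteq> 0 \<and> mev (g j) A *\<^sub>v unit_vec n j = 0\<^sub>v n" by blast
  define G where "G = (\<Prod>j<n. g j)"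
  have "G \<noteq> 0" unfolding G_def using g by auto
  moreover have "mev G A = 0\<^sub>m n n"
  proof (rule mat_eq_by_cols[OF mev_carrier[OF A]])
    fix j assume j: "j < n"
    have "G = (\<Prod>l\<in>{..<n}-{j}. g l) * g j" unfolding G_def using j
      by (metis finite_lessThan lessThan_iff mult.commute prod.remove)
    then have "mev G A = mev (\<Prod>l\<in>{..<n}-{j}. g l) A * mev (g j) A" using mev_mult[OF A] by simp
    then have "mev G A *\<^sub>v unit_vec n j = mev (\<Prod>l\<in>{..<n}-{j}. g l) A *\<^sub>v (mev (g j) A *\<^sub>v unit_vec n j)"
      using A by (simp add: assoc_mult_mat_vec[OF mev_carrier[OF A] mev_carrier[OF A]])
    also have "\<dots> = 0\<^sub>v n" using g[OF j] mev_carrier[OF A] by simp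
    also have "\<dots> = 0\<^sub>m n n *\<^sub>v unit_vec n j" by (intro eq_vecI) (auto simp: scalar_prod_def)
    finally show "mev G A *\<^sub>v unit_vec n j = 0\<^sub>m n n *\<^sub>v unit_vec n j" .
  qed auto
  ultimately show ?thesis by blast
qed


lemma min_poly_unique: fixes A :: "'a::field mat"
  assumes p: "is_minimal_poly A p" and q: "is_minimal_poly A q"
  shows "p = q"
proof (rule ccontr)
  assume ne: "p \<noteq> q"
  let ?n = "dim_row A"
  have mp: "monic p" "poly_mat_eval p A = 0\<^sub>m ?n ?n"
    and mq: "monic q" "poly_mat_eval q A = 0\<^sub>m ?n ?n"
    using p q unfolding is_minimal_poly_def by auto
  have p0: "p \<noteq> 0" and q0: "q \<noteq> 0" using mp mq by auto
  have dpq: "degree p = degree q"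
    using p q p0 q0 mp mq unfolding is_minimal_poly_def by (meson le_antisym)
  let ?r = "p - q"
  have r0: "?r \<noteq> 0" using ne by simp
  have A: "A \<in> carrier_mat ?n (dim_col A)" by auto
  have "poly_mat_eval ?r A = 0\<^sub>m ?n ?n"
  proof -
    have "poly_mat_eval ?r A = mat ?n ?n (\<lambda>(i,j). poly_mat_eval p A $$ (i,j) - poly_mat_eval q A $$ (i,j))"
    proof (rule eq_matI)
      fix i j assume ij: "i < dim_row (mat ?n ?n (\<lambda>(i,j). poly_mat_eval p A $$ (i,j) - poly_mat_eval q A $$ (i,j)))"
         "j < dim_col (mat ?n ?n (\<lambda>(i,j). poly_mat_eval p A $$ (i,j) - poly_mat_eval q A $$ (i,j)))"
      then have i: "i < ?n" and j: "j < ?n" by auto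
      let ?N = "max (degree p) (degree q)"
      have dr: "degree ?r \<le> ?N" by (rule degree_diff_le) auto
      have "poly_mat_eval ?r A $$ (i,j) = (\<Sum>k\<le>?N. coeff ?r k * (A ^\<^sub>m k) $$ (i,j))"
        using i j sum_deg_extend[OF dr] by (simp add: poly_mat_eval_def)
      moreover have "poly_mat_eval p A $$ (i,j) = (\<Sum>k\<le>?N. coeff p k * (A ^\<^sub>m k) $$ (i,j))"
        using i j sum_deg_extend[of p ?N] by (simp add: poly_mat_eval_def)
      moreover have "poly_mat_eval q A $$ (i,j) = (\<Sum>k\<le>?N. coeff q k * (A ^\<^sub>m k) $$ (i,j))"
        using i j sum_deg_extend[of q ?N] by (simp add: poly_mat_eval_def)
      ultimately show "poly_mat_eval ?r A $$ (i,j) = mat ?n ?n (\<lambda>(i,j). poly_mat_eval p A $$ (i,j) - poly_mat_eval q A $$ (i,j)) $$ (i,j)"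
        using i j by (simp add: algebra_simps sum_subtractf)
    qed (auto simp: poly_mat_eval_def)
    also have "\<dots> = 0\<^sub>m ?n ?n" using mp mq by (intro eq_matI) auto
    finally show ?thesis .
  qed
  then have "degree p \<le> degree ?r" using p r0 unfolding is_minimal_poly_def by auto
  moreover have "degree ?r < degree p"
  proof -
    have "degree ?r \<le> degree p" using dpq by (intro degree_diff_le) auto
    moreover have "coeff ?r (degree p) = 0" using mp mq dpq by simp
    ultimately show ?thesis using r0
      by (metis le_neq_implies_less leading_coeff_0_iff)
  qed
  ultimately show False by simp
qed

lemma min_poly_facts: fixes A :: "'a::field mat"
  assumes A: "A \<in> carrier_mat n n" and nd: "non_derogative A"
  shows "\<exists>\<mu>. monic \<mu> \<and> degree \<mu> = n \<and> mev \<mu> A = 0\<^sub>m n n \<and>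
      (\<forall>q. q \<noteq> 0 \<and> mev q A = 0\<^sub>m n n \<longrightarrow> n \<le> degree q)"
proof -
  let ?P = "\<lambda>q. q \<noteq> 0 \<and> mev q A = 0\<^sub>m n n"
  obtain g where "?P g" using global_annihilator[OF A] by blast
  from ex_has_least_nat[of ?P g degree, OF this] obtain q0 where
    q0: "?P q0" and least: "\<And>q. ?P q \<Longrightarrow> degree q0 \<le> degree q" by blast
  define \<mu> where "\<mu> = Polynomial.smult (inverse (lead_coeff q0)) q0"
  have l0: "lead_coeff q0 \<noteq> 0" using q0 by simp
  have mon: "monic \<mu>" unfolding \<mu>_def using l0 by simp
  have deg: "degree \<mu> = degree q0" unfolding \<mu>_def using l0 by simp
  have ev: "mev \<mu> A = 0\<^sub>m n n" unfolding \<mu>_def mev_smult[OF A] using q0 by (intro eq_matI) auto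
  have dimA: "dim_row A = n" using A by simp
  have ismin: "is_minimal_poly A \<mu>"
    unfolding is_minimal_poly_def dimA mev_poly_mat_eval[OF A]
    using mon ev deg least by auto
  have "minimal_poly A = \<mu>"
    unfolding minimal_poly_def using ismin min_poly_unique[OF _ ismin] by (rule the_equality)
  then have "\<mu> = char_poly A" using nd unfolding non_derogative_def by simp
  then have "degree \<mu> = n" using degree_monic_char_poly[OF A] by simp
  then show ?thesis using mon ev deg least by (intro exI[of _ \<mu>]) auto
qed


lemma poly_bez: fixes a b :: "'a::field poly"
  shows "\<exists>h s t. h = s*a + t*b \<and> h dvd a \<and> h dvd b"
proof (cases "a = 0 \<and> b = 0")
  case True then show ?thesis by (intro exI[of _ 0]) auto
next
  case False
  let ?P = "\<lambda>h. h \<noteq> 0 \<and> (\<exists>s t. h = s*a + t*b)"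
  have "?P a \<or> ?P b" using False by (metis add.commute add_0 mult_1 mult_zero_left)
  then obtain h0 where "?P h0" by blast
  from ex_has_least_nat[of ?P h0 degree, OF this] obtain h where
    h: "?P h" and least: "\<And>k. ?P k \<Longrightarrow> degree h \<le> degree k" by blast
  from h obtain s t where st: "h = s*a + t*b" by blast
  have dv: "h dvd x" if x: "x = a \<or> x = b" for x
  proof (rule ccontr)
    assume nd: "\<not> h dvd x"
    let ?r = "x mod h"
    have r0: "?r \<noteq> 0" using nd by (simp add: dvd_eq_mod_eq_0)
    have r: "?r = x - (x div h) * h" using div_mult_mod_eq[of x h] by (simp add: algebra_simps)
    have "\<exists>s t. ?r = s*a + t*b"
    proof (cases "x = a")
      case True
      then have "?r = (1 - (x div h) * s) * a + (- (x div h) * t) * b" using r st by (simp add: algebra_simps)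
      then show ?thesis by blast
    next
      case False
      then have "?r = (- (x div h) * s) * a + (1 - (x div h) * t) * b" using x r st by (simp add: algebra_simps)
      then show ?thesis by blast
    qed
    then have "degree h \<le> degree ?r" using least r0 by blast
    moreover have "degree ?r < degree h" using degree_mod_less[of h x] h r0 by auto
    ultimately show False by simp
  qed
  show ?thesis using st dv by blast
qed

lemma irr_assoc: fixes a p :: "'a::field poly"
  assumes a: "irreducible a" and p: "irreducible p" and pa: "p dvd a"
  shows "a dvd p"
proof -
  from pa obtain c where c: "a = p * c" by (auto simp: dvd_def)
  from irreducibleD[OF a c] irreducible_not_unit[OF p] have "is_unit c" by auto
  then obtain c' where "c * c' = 1" by (auto simp: dvd_def)
  then have "p = a * c'" using c by (metis mult.assoc mult_1_right)
  then show ?thesis by simp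
qed

lemma irr_prime: fixes p :: "'a::field poly"
  assumes p: "irreducible p" and d: "p dvd x * y"
  shows "p dvd x \<or> p dvd y"
proof (cases "p dvd x")
  case True then show ?thesis by simp
next
  case False
  then have nx: "\<not> p dvd x" .
  obtain h s t where h: "h = s*p + t*x" "h dvd p" "h dvd x" using poly_bez by blast
  from h(2) obtain c where c: "p = h * c" by (auto simp: dvd_def)
  have "is_unit h"
  proof (rule ccontr)
    assume "\<not> is_unit h"
    then have "is_unit c" using irreducibleD[OF p c] by auto
    then obtain c' where "c * c' = 1" by (auto simp: dvd_def)
    then have "h = p * c'" using c by (metis mult.assoc mult_1_right)
    then have "p dvd x" using h(3) by (metis dvd_mult_left dvd_trans dvd_triv_left)
    then show False using nx by simp
  qed
  then obtain h' where hh: "1 = h * h'" by (auto simp: dvd_def)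
  have "y = (h' * s * y) * p + (h' * t) * (x * y)"
    using hh h(1) by (metis (no_types, lifting) distrib_left mult.commute mult.left_commute mult_1_left)
  then have "p dvd y" using d by (metis dvd_add dvd_mult dvd_triv_right)
  then show ?thesis by simp
qed

lemma irr_prime_pow: fixes p :: "'a::field poly"
  assumes p: "irreducible p" and d: "p dvd x ^ e"
  shows "p dvd x"
  using d
proof (induct e)
  case 0 then show ?case using irreducible_not_unit[OF p] by simp
next
  case (Suc e)
  then show ?case using irr_prime[OF p, of x "x^e"] by auto
qed

lemma irr_prime_prod: fixes p :: "'a::field poly"
  assumes p: "irreducible p" and fin: "finite S" and d: "p dvd (\<Prod>b\<in>S. f b)"
  shows "\<exists>b\<in>S. p dvd f b"
  using fin d
proof (induct S rule: finite_induct)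
  case empty then show ?case using irreducible_not_unit[OF p] by simp
next
  case (insert b S)
  then show ?case using irr_prime[OF p, of "f b" "\<Prod>b\<in>S. f b"] by auto
qed

lemma poly_cop: fixes x y :: "'a::field poly"
  assumes x0: "x \<noteq> 0" and nc: "\<And>p. irreducible p \<Longrightarrow> p dvd x \<Longrightarrow> p dvd y \<Longrightarrow> False"
  shows "\<exists>s t. s*x + t*y = 1"
proof -
  obtain h s t where h: "h = s*x + t*y" "h dvd x" "h dvd y" using poly_bez by blast
  have h0: "h \<noteq> 0" using h(2) x0 by auto
  show ?thesis
  proof (cases "degree h = 0")
    case True
    then have "is_unit h" using is_unit_iff_degree[OF h0] by simp
    then obtain h' where hh: "1 = h * h'" by (auto simp: dvd_def)
    then have "(h' * s) * x + (h' * t) * y = 1" using h(1)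
      by (simp add: algebra_simps)
    then show ?thesis by blast
  next
    case False
    then obtain q r where q: "irreducible q" "h = q * r" using irreducible_monic_factor[of h] by auto
    then have "q dvd x" "q dvd y" using h by (metis dvd_trans dvd_triv_left)+
    then show ?thesis using nc[OF q(1)] by blast
  qed
qed

lemma monic_irr_eq: fixes a b :: "'a::field poly"
  assumes "irreducible a" "irreducible b" "monic a" "monic b" "a dvd b"
  shows "a = b"
  using irreducible\<^sub>d_dvd_eq[of a b] assms by simp


context
  fixes A :: "'a::field mat" and n :: nat
  assumes A: "A \<in> carrier_mat n n"
begin

definition ev :: "'a poly \<Rightarrow> 'a vec \<Rightarrow> 'a vec" where
  "ev g u = mev g A *\<^sub>v u"

lemma ev_carrier[simp]: "ev g u \<in> carrier_vec n"
  unfolding ev_def using A by (simp add: carrier_vecI)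

lemma ev_mult: "u \<in> carrier_vec n \<Longrightarrow> ev (g * h) u = ev g (ev h u)"
  unfolding ev_def using A mev_mult[OF A] by (simp add: assoc_mult_mat_vec[OF mev_carrier[OF A] mev_carrier[OF A]])

lemma ev_add: "u \<in> carrier_vec n \<Longrightarrow> ev (g + h) u = ev g u + ev h u"
  unfolding ev_def using A mev_add[OF A] by (simp add: add_mult_distrib_mat_vec[OF mev_carrier[OF A] mev_carrier[OF A]])

lemma ev_vadd: "u \<in> carrier_vec n \<Longrightarrow> w \<in> carrier_vec n \<Longrightarrow> ev g (u + w) = ev g u + ev g w"
  unfolding ev_def using A by (simp add: mult_add_distrib_mat_vec[OF mev_carrier[OF A]])

lemma ev_one: "u \<in> carrier_vec n \<Longrightarrow> ev 1 u = u"
  unfolding ev_def using A mev_one[OF A] by simp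

lemma ev_zero_vec[simp]: "ev g (0\<^sub>v n) = 0\<^sub>v n"
  unfolding ev_def using A by simp

lemma ev_dvd: assumes u: "u \<in> carrier_vec n" and hg: "h dvd g" and h: "ev h u = 0\<^sub>v n"
  shows "ev g u = 0\<^sub>v n"
proof -
  from hg obtain c where g: "g = c * h" by (metis dvd_def mult.commute)
  show ?thesis unfolding g ev_mult[OF u] h by simp
qed

lemma ev_comb: assumes u: "u \<in> carrier_vec n" and st: "s * f + t * g = 1"
  and f: "ev f u = 0\<^sub>v n" and g: "ev g u = 0\<^sub>v n"
  shows "u = 0\<^sub>v n"
proof -
  have "u = ev (s * f + t * g) u" using st ev_one[OF u] by simp
  also have "\<dots> = 0\<^sub>v n" using ev_add[OF u] ev_mult[OF u] f g by simp
  finally show ?thesis .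
qed

lemma ev_nonzero_mat: assumes "mev g A \<noteq> 0\<^sub>m n n"
  shows "\<exists>x\<in>carrier_vec n. ev g x \<noteq> 0\<^sub>v n"
proof (rule ccontr)
  assume "\<not> ?thesis"
  then have "\<And>j. j < n \<Longrightarrow> mev g A *\<^sub>v unit_vec n j = 0\<^sub>m n n *\<^sub>v unit_vec n j"
    unfolding ev_def by (auto intro!: eq_vecI simp: scalar_prod_def)
  then have "mev g A = 0\<^sub>m n n" by (intro mat_eq_by_cols[OF mev_carrier[OF A]]) auto
  then show False using assms by simp
qed

definition good :: "'a poly \<Rightarrow> 'a vec \<Rightarrow> bool" where
  "good f u \<longleftrightarrow> u \<in> carrier_vec n \<and> (\<forall>g. ev g u = 0\<^sub>v n \<longleftrightarrow> f dvd g)"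

lemma good_1: "good 1 (0\<^sub>v n)" unfolding good_def by simp

lemma good_mult: assumes gu: "good f u" and gw: "good g w" and st: "s * f + t * g = 1"
  shows "good (f * g) (u + w)"
proof -
  have u: "u \<in> carrier_vec n" and w: "w \<in> carrier_vec n" using gu gw by (auto simp: good_def)
  have fu: "\<And>h. ev h u = 0\<^sub>v n \<longleftrightarrow> f dvd h" and gw': "\<And>h. ev h w = 0\<^sub>v n \<longleftrightarrow> g dvd h"
    using gu gw by (auto simp: good_def)
  have "ev h (u + w) = 0\<^sub>v n \<longleftrightarrow> f * g dvd h" for h
  proof
    assume fg: "f * g dvd h"
    then have "f dvd h" "g dvd h" by (auto intro: dvd_mult_left dvd_mult_right)
    then have 1: "ev h u = 0\<^sub>v n" "ev h w = 0\<^sub>v n" using fu gw' by blast+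
    show "ev h (u + w) = 0\<^sub>v n" unfolding ev_vadd[OF u w] 1 by simp
  next
    assume h: "ev h (u + w) = 0\<^sub>v n"
    have "ev (g * h) (u + w) = 0\<^sub>v n" using h ev_mult[of "u+w"] u w by simp
    moreover have "ev (g * h) w = 0\<^sub>v n" using gw' by simp
    ultimately have "ev (g * h) u = 0\<^sub>v n" using ev_vadd[OF u w] by simp
    then have fgh: "f dvd g * h" using fu by simp
    have "ev (f * h) (u + w) = 0\<^sub>v n" using h ev_mult[of "u+w"] u w by simp
    moreover have "ev (f * h) u = 0\<^sub>v n" using fu by simp
    ultimately have "ev (f * h) w = 0\<^sub>v n" using ev_vadd[OF u w] ev_carrier by simp
    then have gfh: "g dvd f * h" using gw' by simp
    have hh: "h = f * (s * h) + t * (g * h)"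
    proof -
      have "f * (s * h) + t * (g * h) = (s * f + t * g) * h" by (simp add: algebra_simps)
      then show ?thesis using st by simp
    qed
    have hh2: "h = s * (f * h) + g * (t * h)" using hh by (simp add: ac_simps)
    have fh: "f dvd h" by (subst hh) (intro dvd_add dvd_triv_left dvd_mult fgh)
    have gh: "g dvd h" by (subst hh2) (intro dvd_add dvd_triv_left dvd_mult gfh)
    have "f * g dvd f * (s * h)" using gh by (simp add: mult_dvd_mono)
    moreover have "f * g dvd t * (g * h)"
    proof -
      have "f * g dvd h * g" using fh by (rule mult_dvd_mono) simp
      then have "f * g dvd g * h" by (simp add: mult.commute)
      then show ?thesis by (rule dvd_mult)
    qed
    ultimately show "f * g dvd h" by (subst hh) (rule dvd_add)
  qed
  then show ?thesis unfolding good_def using u w by simp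
qed

context
  fixes \<mu> :: "'a poly"
  assumes mon: "monic \<mu>" and ann: "mev \<mu> A = 0\<^sub>m n n" and deg: "degree \<mu> = n"
    and minim: "\<And>q. q \<noteq> 0 \<Longrightarrow> mev q A = 0\<^sub>m n n \<Longrightarrow> n \<le> degree q"
begin

lemma ev_mu: "u \<in> carrier_vec n \<Longrightarrow> ev \<mu> u = 0\<^sub>v n"
  unfolding ev_def ann by (intro eq_vecI) (auto simp: scalar_prod_def)

lemma cyclic_vec: "\<exists>v\<in>carrier_vec n. \<forall>g. g \<noteq> 0 \<and> degree g < n \<longrightarrow> ev g v \<noteq> 0\<^sub>v n"
proof -
  obtain as f where fin: "finite as" and mu: "\<mu> = (\<Prod>a\<in>as. a ^ Suc (f a))"
    and irr: "as \<subseteq> {q. irreducible q \<and> monic q}"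
    using monic_irreducible_factorization[OF mon] by blast
  define e where "e a = Suc (f a)" for a
  have mu': "\<mu> = (\<Prod>a\<in>as. a ^ e a)" using mu e_def by simp
  have irr_a: "irreducible a" "monic a" if "a \<in> as" for a using irr that by auto
  have cop: "\<exists>s t. s * a ^ e a + t * (\<Prod>b\<in>S. b ^ e b) = 1"
    if a: "a \<in> as" and S: "S \<subseteq> as" "a \<notin> S" for a S
  proof (rule poly_cop)
    show "a ^ e a \<noteq> 0" using irr_a[OF a] by auto
  next
    fix p assume p: "irreducible p" "p dvd a ^ e a" "p dvd (\<Prod>b\<in>S. b ^ e b)"
    have "p dvd a" using irr_prime_pow[OF p(1,2)] .
    then have ap: "a dvd p" using irr_assoc[OF irr_a(1)[OF a] p(1)] by simp
    obtain b where b: "b \<in> S" "p dvd b ^ e b"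
      using irr_prime_prod[OF p(1) finite_subset[OF S(1) fin] p(3)] by blast
    have bS: "b \<in> as" using b S by auto
    have "a dvd b" using irr_prime_pow[OF p(1) b(2)] ap dvd_trans by blast
    then have "a = b" using monic_irr_eq irr_a a bS by blast
    then show False using b S by simp
  qed
  have good_a: "\<exists>w. good (a ^ e a) w" if a: "a \<in> as" for a
  proof -
    define Q where "Q = (\<Prod>b\<in>as-{a}. b ^ e b)"
    define R where "R = a ^ f a * Q"
    have muQ: "\<mu> = a ^ e a * Q" unfolding mu' Q_def using a fin by (simp add: prod.remove)
    have muR: "\<mu> = a * R" unfolding muQ R_def e_def by (simp add: mult.assoc)
    have a0: "a \<noteq> 0" and au: "\<not> is_unit a" using irr_a[OF a] irreducible_not_unit by auto
    have da: "degree a \<ge> 1" using a0 au is_unit_iff_degree by fastforce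
    have R0: "R \<noteq> 0" using muR mon by auto
    have "degree \<mu> = degree a + degree R" using muR a0 R0 by (simp add: degree_mult_eq)
    then have "degree R < n" using da deg by simp
    then have "mev R A \<noteq> 0\<^sub>m n n" using minim[OF R0] by auto
    then obtain x where x: "x \<in> carrier_vec n" and y0: "ev R x \<noteq> 0\<^sub>v n"
      using ev_nonzero_mat by blast
    define w where "w = ev Q x"
    have w: "w \<in> carrier_vec n" unfolding w_def by simp
    have wa: "ev (a ^ e a) w = 0\<^sub>v n" unfolding w_def ev_mult[OF x, symmetric] muQ[symmetric] using ev_mu[OF x] .
    have wfa: "ev (a ^ f a) w \<noteq> 0\<^sub>v n" unfolding w_def ev_mult[OF x, symmetric] R_def[symmetric] using y0 .
    have key: "k \<le> e a \<Longrightarrow> a ^ k dvd g" if g: "ev g w = 0\<^sub>v n" for k g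
    proof (induct k)
      case 0 then show ?case by simp
    next
      case (Suc k)
      then obtain g1 where g1: "g = a ^ k * g1" by (auto simp: dvd_def)
      show ?case
      proof (rule ccontr)
        assume nd: "\<not> a ^ Suc k dvd g"
        have nd1: "\<not> a dvd g1"
        proof
          assume "a dvd g1"
          then have "a ^ Suc k dvd g" unfolding g1 by (simp add: mult_dvd_mono)
          then show False using nd by simp
        qed
        obtain s t where st: "s * a + t * g1 = 1"
        proof (atomize_elim, rule poly_cop[OF a0])
          fix p assume p: "irreducible p" "p dvd a" "p dvd g1"
          have "a dvd p" using irr_assoc[OF irr_a(1)[OF a] p(1,2)] .
          then show False using p(3) nd1 dvd_trans by blast
        qed
        define z where "z = ev (a ^ f a) w"
        have z: "z \<in> carrier_vec n" unfolding z_def by simp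
        have fk: "f a = k + (f a - k)" using Suc(2) e_def by simp
        have "ev g1 z = 0\<^sub>v n"
        proof -
          have "a ^ k * a ^ (f a - k) = a ^ f a" using Suc(2) e_def
            by (simp add: power_add[symmetric])
          then have "g1 * a ^ f a = a ^ (f a - k) * g"
            unfolding g1 by (metis mult.assoc mult.commute)
          then have "ev g1 z = ev (a ^ (f a - k)) (ev g w)" unfolding z_def
            ev_mult[OF w, symmetric] by simp
          then show ?thesis using g by simp
        qed
        moreover have "ev a z = 0\<^sub>v n" unfolding z_def ev_mult[OF w, symmetric]
          using wa e_def by simp
        ultimately have "z = 0\<^sub>v n" using ev_comb[OF z st] by simp
        then show False using wfa z_def by simp
      qed
    qed
    have "good (a ^ e a) w" unfolding good_def
    proof (intro conjI allI iffI)
      fix g assume "ev g w = 0\<^sub>v n" then show "a ^ e a dvd g" using key by simp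
    next
      fix g assume "a ^ e a dvd g" then show "ev g w = 0\<^sub>v n" using ev_dvd[OF w _ wa] by simp
    qed (rule w)
    then show ?thesis by blast
  qed
  have "\<exists>u. good (\<Prod>b\<in>S. b ^ e b) u" if S: "S \<subseteq> as" for S
  proof -
    have "finite S" using S fin finite_subset by blast
    then show ?thesis using S
    proof (induct S rule: finite_induct)
      case empty then show ?case using good_1 by auto
    next
      case (insert a S)
      then obtain u where u: "good (\<Prod>b\<in>S. b ^ e b) u" by auto
      obtain w where w: "good (a ^ e a) w" using good_a insert by auto
      obtain s t where st: "s * a ^ e a + t * (\<Prod>b\<in>S. b ^ e b) = 1" using cop[of a S] insert by auto
      have "good (a ^ e a * (\<Prod>b\<in>S. b ^ e b)) (w + u)" by (rule good_mult[OF w u st])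
      then show ?case using insert by auto
    qed
  qed
  then obtain u where u: "good \<mu> u" using mu' by blast
  have "\<forall>g. g \<noteq> 0 \<and> degree g < n \<longrightarrow> ev g u \<noteq> 0\<^sub>v n"
  proof (intro allI impI notI)
    fix g assume g: "g \<noteq> 0 \<and> degree g < n" and "ev g u = 0\<^sub>v n"
    then have "\<mu> dvd g" using u by (auto simp: good_def)
    then have "degree \<mu> \<le> degree g" using g by (simp add: dvd_imp_degree_le)
    then show False using g deg by simp
  qed
  then show ?thesis using u by (auto simp: good_def)
qed

end
end


definition dmat :: "nat \<Rightarrow> (nat \<Rightarrow> 'a::zero) \<Rightarrow> 'a mat" where
  "dmat n lam = mat n n (\<lambda>(i,j). if i = j then lam i else 0)"

lemma dmat_carrier[simp]: "dmat n lam \<in> carrier_mat n n" unfolding dmat_def by simp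

definition diag_in :: "'a::field mat \<Rightarrow> nat \<Rightarrow> 'a set \<Rightarrow> bool" where
  "diag_in D n L \<longleftrightarrow> D \<in> carrier_mat n n \<and> (\<exists>U V lam. U \<in> carrier_mat n n \<and> V \<in> carrier_mat n n \<and>
     U * V = 1\<^sub>m n \<and> V * U = 1\<^sub>m n \<and> V * D * U = dmat n lam \<and> (\<forall>i<n. lam i \<in> L))"

lemma diag_in_diagonalizable: assumes "diag_in D n L" shows "diagonalizable D"
proof -
  from assms obtain U V lam where D: "D \<in> carrier_mat n n" and U: "U \<in> carrier_mat n n" and V: "V \<in> carrier_mat n n"
    and UV: "U * V = 1\<^sub>m n" "V * U = 1\<^sub>m n" and VDU: "V * D * U = dmat n lam"
    unfolding diag_in_def by blast
  have "diagonal_mat (V * D * U)" unfolding VDU diagonal_mat_def dmat_def by auto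
  moreover have "dim_row D = n" using D by simp
  ultimately show ?thesis unfolding diagonalizable_def using U V UV by blast
qed

lemma diag_in_eig: assumes di: "diag_in D n L" and e: "eigenvalue D e" shows "e \<in> L"
proof -
  from di obtain U V lam where D: "D \<in> carrier_mat n n" and U: "U \<in> carrier_mat n n" and V: "V \<in> carrier_mat n n"
    and UV: "U * V = 1\<^sub>m n" "V * U = 1\<^sub>m n" and VDU: "V * D * U = dmat n lam" and L: "\<forall>i<n. lam i \<in> L"
    unfolding diag_in_def by blast
  from e obtain v where v: "v \<in> carrier_vec n" "v \<noteq> 0\<^sub>v n" "D *\<^sub>v v = e \<cdot>\<^sub>v v"
    unfolding eigenvalue_def eigenvector_def using D by auto
  define x where "x = V *\<^sub>v v"
  have x: "x \<in> carrier_vec n" unfolding x_def using V v by simp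
  have "U *\<^sub>v x = v" unfolding x_def using U V v UV
    by (metis assoc_mult_mat_vec one_mult_mat_vec)
  then have x0: "x \<noteq> 0\<^sub>v n" using v U by auto
  then obtain i where i: "i < n" "x $ i \<noteq> 0" using x by (metis eq_vecI carrier_vecD index_zero_vec)
  have "dmat n lam *\<^sub>v x = V *\<^sub>v (D *\<^sub>v (U *\<^sub>v x))"
    unfolding VDU[symmetric] using U V D x by (simp add: assoc_mult_mat_vec[of _ n n _ n])
  also have "\<dots> = V *\<^sub>v (D *\<^sub>v v)" using \<open>U *\<^sub>v x = v\<close> by simp
  also have "\<dots> = V *\<^sub>v (e \<cdot>\<^sub>v v)" using v(3) by simp
  also have "\<dots> = e \<cdot>\<^sub>v x" unfolding x_def using V v by (simp add: mult_mat_vec)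
  finally have eq: "dmat n lam *\<^sub>v x = e \<cdot>\<^sub>v x" .
  have "(dmat n lam *\<^sub>v x) $ i = lam i * x $ i"
  proof -
    have "(dmat n lam *\<^sub>v x) $ i = (\<Sum>l<n. (if i = l then lam i else 0) * x $ l)"
      using i x by (auto simp: dmat_def scalar_prod_def lessThan_atLeast0 intro!: sum.cong)
    also have "\<dots> = (\<Sum>l<n. if l = i then lam i * x $ i else 0)" by (intro sum.cong) auto
    also have "\<dots> = lam i * x $ i" using i by simp
    finally show ?thesis .
  qed
  then have "lam i * x $ i = e * x $ i" using eq i x by (metis index_smult_vec(1) carrier_vecD)
  then have "lam i = e" using i(2) by simp
  then show ?thesis using L i by auto
qed

lemma diag_in_sim: assumes di: "diag_in D n L" and P: "P \<in> carrier_mat n n" and Q: "Q \<in> carrier_mat n n"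
  and PQ: "P * Q = 1\<^sub>m n" "Q * P = 1\<^sub>m n"
  shows "diag_in (P * D * Q) n L"
proof -
  from di obtain U V lam where D: "D \<in> carrier_mat n n" and U: "U \<in> carrier_mat n n" and V: "V \<in> carrier_mat n n"
    and UV: "U * V = 1\<^sub>m n" "V * U = 1\<^sub>m n" and VDU: "V * D * U = dmat n lam" and L: "\<forall>i<n. lam i \<in> L"
    unfolding diag_in_def by blast
  have c1: "P * U \<in> carrier_mat n n" "V * Q \<in> carrier_mat n n" "P * D * Q \<in> carrier_mat n n" using P U V Q D by auto
  have "(P * U) * (V * Q) = P * (U * V) * Q" using P U V Q by (simp add: assoc_mult_mat[of _ n n _ n _ n])
  also have "\<dots> = 1\<^sub>m n" using UV PQ P by simp
  finally have e1: "(P * U) * (V * Q) = 1\<^sub>m n" .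
  have "(V * Q) * (P * U) = V * (Q * P) * U" using P U V Q by (simp add: assoc_mult_mat[of _ n n _ n _ n])
  also have "\<dots> = 1\<^sub>m n" using UV PQ V by simp
  finally have e2: "(V * Q) * (P * U) = 1\<^sub>m n" .
  have "(V * Q) * (P * D * Q) * (P * U) = V * (Q * P) * D * (Q * P) * U"
    using P U V Q D by (simp add: assoc_mult_mat[of _ n n _ n _ n])
  also have "\<dots> = V * D * U" using PQ V D by simp
  finally have e3: "(V * Q) * (P * D * Q) * (P * U) = dmat n lam" using VDU by simp
  show ?thesis unfolding diag_in_def using c1 e1 e2 e3 L by blast
qed

lemma diag_by_eigvecs: assumes D: "D \<in> carrier_mat n n" and U: "U \<in> carrier_mat n n" and dU: "det U \<noteq> 0"
  and ev: "\<And>c. c < n \<Longrightarrow> D *\<^sub>v (U *\<^sub>v unit_vec n c) = lam c \<cdot>\<^sub>v (U *\<^sub>v unit_vec n c)"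
  and L: "\<And>c. c < n \<Longrightarrow> lam c \<in> L"
  shows "diag_in D n L"
proof -
  obtain V where V: "V \<in> carrier_mat n n" and UV: "U * V = 1\<^sub>m n" "V * U = 1\<^sub>m n"
    using det_inv[OF U dU] by blast
  have DU: "D * U = U * dmat n lam"
  proof (rule mat_eq_by_cols)
    fix c assume c: "c < n"
    have "D * U *\<^sub>v unit_vec n c = D *\<^sub>v (U *\<^sub>v unit_vec n c)" using D U by simp
    also have "\<dots> = lam c \<cdot>\<^sub>v (U *\<^sub>v unit_vec n c)" by (rule ev[OF c])
    also have "\<dots> = U *\<^sub>v (lam c \<cdot>\<^sub>v unit_vec n c)" using U by (simp add: mult_mat_vec)
    also have "lam c \<cdot>\<^sub>v unit_vec n c = dmat n lam *\<^sub>v unit_vec n c"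
      using c by (intro eq_vecI) (auto simp: dmat_def scalar_prod_right_unit)
    also have "U *\<^sub>v (dmat n lam *\<^sub>v unit_vec n c) = U * dmat n lam *\<^sub>v unit_vec n c"
      by (rule assoc_mult_mat_vec[symmetric, OF U dmat_carrier unit_vec_carrier])
    finally show "D * U *\<^sub>v unit_vec n c = U * dmat n lam *\<^sub>v unit_vec n c" .
  qed (use D U in auto)
  have "V * D * U = V * (D * U)" using V D U by simp
  also have "\<dots> = V * U * dmat n lam" unfolding DU by (rule assoc_mult_mat[symmetric, OF V U dmat_carrier])
  also have "\<dots> = dmat n lam" using UV left_mult_one_mat[OF dmat_carrier] by simp
  finally show ?thesis unfolding diag_in_def using D U V UV L by blast
qed


lemma mv_entry: assumes A: "A \<in> carrier_mat nr n" and x: "x \<in> carrier_vec n" and r: "r < nr"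
  shows "(A *\<^sub>v x) $ r = (\<Sum>l<n. A $$ (r,l) * x $ l)"
  using A x r by (auto simp: scalar_prod_def lessThan_atLeast0)

lemma det_lt_nz: assumes A: "(A :: 'a::field mat) \<in> carrier_mat n n"
  and lt: "\<And>i j. i < j \<Longrightarrow> j < n \<Longrightarrow> A $$ (i,j) = 0" and nz: "\<And>i. i < n \<Longrightarrow> A $$ (i,i) \<noteq> 0"
  shows "det A \<noteq> 0"
proof -
  have "det A = (\<Prod>i = 0..<n. A $$ (i,i))"
    using det_lower_triangular[OF lt A] A by (simp add: prod_list_diag_prod)
  then show ?thesis using nz by simp
qed

lemma det_ut_nz: assumes A: "(A :: 'a::field mat) \<in> carrier_mat n n"
  and ut: "\<And>i j. j < i \<Longrightarrow> i < n \<Longrightarrow> A $$ (i,j) = 0" and nz: "\<And>i. i < n \<Longrightarrow> A $$ (i,i) \<noteq> 0"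
  shows "det A \<noteq> 0"
proof -
  have "upper_triangular A" unfolding upper_triangular_def using A ut by auto
  then have "det A = (\<Prod>i = 0..<n. A $$ (i,i))"
    using det_upper_triangular[OF _ A] A by (simp add: prod_list_diag_prod)
  then show ?thesis using nz by simp
qed

definition Smat :: "nat \<Rightarrow> 'a::field mat" where
  "Smat n = mat n n (\<lambda>(r,c). if r = Suc c \<and> even c then 1 else 0)"

lemma Smat_carrier[simp]: "Smat n \<in> carrier_mat n n" unfolding Smat_def by simp

lemma Smat_sq: "Smat n * Smat n = (0\<^sub>m n n :: 'a::field mat)"
proof (rule eq_matI)
  fix i j assume i: "i < dim_row (0\<^sub>m n n :: 'a mat)" and j: "j < dim_col (0\<^sub>m n n :: 'a mat)"
  have "(Smat n * Smat n :: 'a mat) $$ (i,j) = (\<Sum>l<n. Smat n $$ (i,l) * Smat n $$ (l,j))"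
    using i j by (auto simp: Smat_def scalar_prod_def lessThan_atLeast0 intro!: sum.cong)
  also have "\<dots> = 0" by (intro sum.neutral) (use i j in \<open>auto simp: Smat_def\<close>)
  finally show "(Smat n * Smat n :: 'a mat) $$ (i,j) = 0\<^sub>m n n $$ (i,j)" using i j by simp
qed (auto simp: Smat_def)

locale loc =
  fixes M :: "'a::field mat" and n :: nat and d :: "nat \<Rightarrow> 'a" and \<delta> :: 'a
  assumes M: "M \<in> carrier_mat n n" and n2: "2 \<le> n" and ne: "even n"
    and Mcol: "\<And>i. Suc i < n \<Longrightarrow> M *\<^sub>v unit_vec n i = d i \<cdot>\<^sub>v unit_vec n i + unit_vec n (Suc i)"
    and dl: "\<delta> = M $$ (n-1, n-1)"
    and dd: "\<And>i. odd i \<Longrightarrow> Suc i < n - 1 \<Longrightarrow> d i \<noteq> d (Suc i)"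
    and dde: "\<And>i. i < n - 1 \<Longrightarrow> d i \<noteq> \<delta>"
begin

definition D where "D = M - Smat n"

lemma D_carrier[simp]: "D \<in> carrier_mat n n" unfolding D_def carrier_mat_def by (simp add: Smat_def)

lemma M_entry: assumes r: "r < n" and c: "Suc c < n"
  shows "M $$ (r,c) = (if r = c then d c else 0) + (if r = Suc c then 1 else 0)"
proof -
  have "M $$ (r,c) = (M *\<^sub>v unit_vec n c) $ r" using mat_vec_unit_entry[OF M r] c by simp
  also have "\<dots> = (if r = c then d c else 0) + (if r = Suc c then 1 else 0)"
    unfolding Mcol[OF c] using r c by auto
  finally show ?thesis .
qed

lemma D_entry: assumes r: "r < n" and c: "c < n"
  shows "D $$ (r,c) = (if c = n - 1 then M $$ (r,c) else if r = c then d c else if r = Suc c \<and> odd c then 1 else 0)"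
proof (cases "c = n - 1")
  case True
  then show ?thesis unfolding D_def using M r c by (auto simp: Smat_def)
next
  case False
  then have "Suc c < n" using c by simp
  then show ?thesis unfolding D_def using M r c M_entry[OF r] False by (auto simp: Smat_def)
qed

lemma D_last: "D $$ (n-1, n-1) = \<delta>"
  using D_entry[of "n-1" "n-1"] n2 dl by simp

definition K where "K = mat n n (\<lambda>(i,j). if j = n - 1 then (if i = n - 1 then 1 else 0)
   else D $$ (i,j) - (if i = j then \<delta> else 0))"

lemma K_carrier[simp]: "K \<in> carrier_mat n n" unfolding K_def by simp

lemma K_det: "det K \<noteq> 0"
proof (rule det_lt_nz[OF K_carrier])
  fix i j assume ij: "i < j" "j < n"
  then show "K $$ (i,j) = 0" unfolding K_def using D_entry[of i j] by auto
next
  fix i assume i: "i < n"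
  show "K $$ (i,i) \<noteq> 0" unfolding K_def using D_entry[of i i] i dde[of i] by auto
qed

definition rr where "rr = vec n (\<lambda>i. if i = n - 1 then 0 else D $$ (i, n - 1))"

definition Kinv where "Kinv = (SOME B. B \<in> carrier_mat n n \<and> K * B = 1\<^sub>m n \<and> B * K = 1\<^sub>m n)"

lemma Kinv: "Kinv \<in> carrier_mat n n" "K * Kinv = 1\<^sub>m n"
  using someI_ex[OF det_inv[OF K_carrier K_det]] unfolding Kinv_def by auto

definition y where "y = Kinv *\<^sub>v (- rr)"

lemma y_carrier[simp]: "y \<in> carrier_vec n" unfolding y_def using Kinv by (simp add: rr_def)

lemma Ky: "K *\<^sub>v y = - rr"
proof -
  have rr: "- rr \<in> carrier_vec n" by (simp add: rr_def)
  have "K *\<^sub>v y = (K * Kinv) *\<^sub>v (- rr)" unfolding y_def by (rule assoc_mult_mat_vec[symmetric, OF K_carrier Kinv(1) rr])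
  then show ?thesis using Kinv(2) one_mult_mat_vec[OF rr] by simp
qed

lemma y_last: "y $ (n-1) = 0"
proof -
  have n1: "n - 1 < n" using n2 by simp
  have "(K *\<^sub>v y) $ (n-1) = (\<Sum>l<n. K $$ (n-1,l) * y $ l)" by (rule mv_entry[OF K_carrier y_carrier n1])
  also have "\<dots> = (\<Sum>l<n. if l = n - 1 then y $ l else 0)"
  proof (intro sum.cong refl)
    fix l assume l: "l \<in> {..<n}"
    have nn: "\<not> (n - 1 = Suc l \<and> odd l)"
    proof
      assume "n - 1 = Suc l \<and> odd l"
      then have "n = l + 2" "odd l" by auto
      then show False using ne by simp
    qed
    have "l \<noteq> n - 1 \<Longrightarrow> K $$ (n-1,l) = 0" unfolding K_def using l n1 D_entry[OF n1, of l] nn by auto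
    moreover have "K $$ (n-1,n-1) = 1" unfolding K_def using n1 by simp
    ultimately show "K $$ (n-1,l) * y $ l = (if l = n - 1 then y $ l else 0)" by auto
  qed
  also have "\<dots> = y $ (n-1)" using n1 by simp
  finally have "y $ (n-1) = (K *\<^sub>v y) $ (n-1)" by simp
  also have "\<dots> = 0" unfolding Ky using n1 by (simp add: rr_def)
  finally show ?thesis .
qed

lemma n1: "n - 1 < n" using n2 by simp

lemma odd_lt: assumes "odd c" "c < n - 1" shows "Suc c < n - 1"
proof -
  have "Suc c \<noteq> n - 1"
  proof
    assume "Suc c = n - 1" then have "n = c + 2" using n2 by simp
    then show False using assms ne by simp
  qed
  then show ?thesis using assms by simp
qed

definition Up where "Up = mat n n (\<lambda>(i,j). if j = n - 1 then (if i = n - 1 then 1 else 0)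
  else if even j then (if i = j then 1 else 0)
  else (if i = j then d j - d (Suc j) else 0) + (if i = Suc j then 1 else 0))"

definition Tm where "Tm = mat n n (\<lambda>(i,j). (if i = j then 1 else 0) + (if j = n - 1 then y $ i else 0))"

definition U where "U = Tm * Up"

definition lam where "lam c = (if c = n - 1 then \<delta> else d c)"

lemma Up_carrier[simp]: "Up \<in> carrier_mat n n" unfolding Up_def by simp
lemma Tm_carrier[simp]: "Tm \<in> carrier_mat n n" unfolding Tm_def by simp
lemma U_carrier[simp]: "U \<in> carrier_mat n n" unfolding U_def by (rule mult_carrier_mat[OF Tm_carrier Up_carrier])

lemma det_Up: "det Up \<noteq> 0"
proof (rule det_lt_nz[OF Up_carrier])
  fix i j assume ij: "i < j" "j < n"
  then show "Up $$ (i,j) = 0" unfolding Up_def by auto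
next
  fix i assume i: "i < n"
  show "Up $$ (i,i) \<noteq> 0"
  proof (cases "i = n - 1 \<or> even i")
    case True then show ?thesis unfolding Up_def using i by auto
  next
    case False
    then have "odd i" "i < n - 1" using i by auto
    then show ?thesis unfolding Up_def using i dd[of i] odd_lt by auto
  qed
qed

lemma det_Tm: "det Tm \<noteq> 0"
proof (rule det_ut_nz[OF Tm_carrier])
  fix i j assume ij: "j < i" "i < n"
  then show "Tm $$ (i,j) = 0" unfolding Tm_def by auto
next
  fix i assume i: "i < n"
  show "Tm $$ (i,i) \<noteq> 0" unfolding Tm_def using i y_last by auto
qed

lemma det_U: "det U \<noteq> 0"
  unfolding U_def using det_mult[OF Tm_carrier Up_carrier] det_Tm det_Up by simp

lemma Tm_apply: assumes x: "x \<in> carrier_vec n" and r: "r < n"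
  shows "(Tm *\<^sub>v x) $ r = x $ r + y $ r * x $ (n - 1)"
proof -
  have "(Tm *\<^sub>v x) $ r = (\<Sum>l<n. Tm $$ (r,l) * x $ l)" by (rule mv_entry[OF Tm_carrier x r])
  also have "\<dots> = (\<Sum>l<n. (if l = r then x $ r else 0) + (if l = n - 1 then y $ r * x $ (n - 1) else 0))"
    unfolding Tm_def using r by (intro sum.cong) (auto simp: algebra_simps)
  also have "\<dots> = x $ r + y $ r * x $ (n - 1)" using r n1 by (simp add: sum.distrib)
  finally show ?thesis .
qed

lemma U_col: assumes c: "c < n" and r: "r < n"
  shows "(U *\<^sub>v unit_vec n c) $ r = Up $$ (r,c) + (if c = n - 1 then y $ r else 0)"
proof -
  have "U *\<^sub>v unit_vec n c = Tm *\<^sub>v (Up *\<^sub>v unit_vec n c)" unfolding U_def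
    by (rule assoc_mult_mat_vec[OF Tm_carrier Up_carrier unit_vec_carrier])
  moreover have "Up *\<^sub>v unit_vec n c \<in> carrier_vec n" by (rule mult_mat_vec_carrier[OF Up_carrier unit_vec_carrier])
  ultimately have "(U *\<^sub>v unit_vec n c) $ r = (Up *\<^sub>v unit_vec n c) $ r + y $ r * (Up *\<^sub>v unit_vec n c) $ (n - 1)"
    using Tm_apply r by simp
  also have "(Up *\<^sub>v unit_vec n c) $ r = Up $$ (r,c)" by (rule mat_vec_unit_entry[OF Up_carrier r c])
  also have "(Up *\<^sub>v unit_vec n c) $ (n - 1) = Up $$ (n - 1,c)" by (rule mat_vec_unit_entry[OF Up_carrier n1 c])
  also have "Up $$ (n - 1, c) = (if c = n - 1 then 1 else 0)"
  proof -
    have "c \<noteq> n - 1 \<Longrightarrow> odd c \<Longrightarrow> n - 1 \<noteq> Suc c" using odd_lt[of c] c by auto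
    then show ?thesis unfolding Up_def using c n1 by auto
  qed
  finally show ?thesis by simp
qed

lemma sum_two: assumes "c < n" "Suc c < n"
  shows "(\<Sum>l<n. f l * ((if l = c then \<alpha> else 0) + (if l = Suc c then \<beta> else 0))) = f c * \<alpha> + f (Suc c) * (\<beta>::'a)"
proof -
  have "(\<Sum>l<n. f l * ((if l = c then \<alpha> else 0) + (if l = Suc c then \<beta> else 0)))
    = (\<Sum>l<n. (if l = c then f c * \<alpha> else 0) + (if l = Suc c then f (Suc c) * \<beta> else 0))"
    by (intro sum.cong) auto
  also have "\<dots> = f c * \<alpha> + f (Suc c) * \<beta>" using assms by (simp add: sum.distrib)
  finally show ?thesis .
qed

lemma eig: assumes c: "c < n"
  shows "D *\<^sub>v (U *\<^sub>v unit_vec n c) = lam c \<cdot>\<^sub>v (U *\<^sub>v unit_vec n c)"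
proof (rule eq_vecI)
  fix r assume "r < dim_vec (lam c \<cdot>\<^sub>v (U *\<^sub>v unit_vec n c))"
  then have r: "r < n" by (simp add: carrier_matD[OF U_carrier])
  let ?u = "U *\<^sub>v unit_vec n c"
  have u: "?u \<in> carrier_vec n" by (rule mult_mat_vec_carrier[OF U_carrier unit_vec_carrier])
  have lhs: "(D *\<^sub>v ?u) $ r = (\<Sum>l<n. D $$ (r,l) * ?u $ l)" by (rule mv_entry[OF D_carrier u r])
  have du: "dim_vec ?u = n" using carrier_matD[OF U_carrier] by simp
  have rhs: "(lam c \<cdot>\<^sub>v ?u) $ r = lam c * ?u $ r" using r du by simp
  show "(D *\<^sub>v ?u) $ r = (lam c \<cdot>\<^sub>v ?u) $ r"
  proof (cases "c = n - 1")
    case False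
    then have c1: "c < n - 1" using c by simp
    have ul: "?u $ l = Up $$ (l,c)" if "l < n" for l using U_col[OF c that] False by simp
    show ?thesis
    proof (cases "even c")
      case True
      have "(\<Sum>l<n. D $$ (r,l) * ?u $ l) = (\<Sum>l<n. if l = c then D $$ (r,c) else 0)"
        using ul True False c by (intro sum.cong) (auto simp: Up_def)
      also have "\<dots> = D $$ (r,c)" using c by simp
      also have "\<dots> = lam c * ?u $ r" using D_entry[OF r c] ul[OF r] True False c r
        by (auto simp: lam_def Up_def)
      finally show ?thesis using lhs rhs by simp
    next
      case odd: False
      have sc: "Suc c < n - 1" using odd_lt[OF _ c1] odd by simp
      have "(\<Sum>l<n. D $$ (r,l) * ?u $ l) = (\<Sum>l<n. D $$ (r,l) * ((if l = c then d c - d (Suc c) else 0) + (if l = Suc c then 1 else 0)))"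
        using ul odd False c by (intro sum.cong) (auto simp: Up_def)
      also have "\<dots> = D $$ (r,c) * (d c - d (Suc c)) + D $$ (r, Suc c) * 1"
        by (rule sum_two) (use c sc in auto)
      also have "\<dots> = lam c * ?u $ r" using D_entry[OF r c] D_entry[OF r, of "Suc c"] ul[OF r] odd False c r sc
        by (auto simp: lam_def Up_def algebra_simps)
      finally show ?thesis using lhs rhs by simp
    qed
  next
    case True
    have ul: "?u $ l = (if l = n - 1 then 1 else 0) + y $ l" if "l < n" for l
      using U_col[OF c that] True that by (auto simp: Up_def)
    have "(\<Sum>l<n. D $$ (r,l) * ?u $ l) = (\<Sum>l<n. (if l = n - 1 then D $$ (r, n - 1) else 0) + D $$ (r,l) * y $ l)"
      using ul by (intro sum.cong) (auto simp: algebra_simps)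
    also have "\<dots> = D $$ (r, n - 1) + (\<Sum>l<n. D $$ (r,l) * y $ l)" using n1 by (simp add: sum.distrib)
    also have "(\<Sum>l<n. D $$ (r,l) * y $ l) = (\<Sum>l<n. K $$ (r,l) * y $ l + (if l = r then \<delta> * y $ r else 0))"
    proof (intro sum.cong refl)
      fix l assume l: "l \<in> {..<n}"
      show "D $$ (r,l) * y $ l = K $$ (r,l) * y $ l + (if l = r then \<delta> * y $ r else 0)"
        using l r y_last unfolding K_def by (cases "l = n - 1") (auto simp: algebra_simps)
    qed
    also have "\<dots> = (K *\<^sub>v y) $ r + \<delta> * y $ r" using r mv_entry[OF K_carrier y_carrier r] by (simp add: sum.distrib)
    also have "(K *\<^sub>v y) $ r = - rr $ r" unfolding Ky using r by (simp add: rr_def)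
    finally have "(\<Sum>l<n. D $$ (r,l) * ?u $ l) = D $$ (r, n - 1) - rr $ r + \<delta> * y $ r" by simp
    also have "\<dots> = lam c * ?u $ r" using ul[OF r] True r D_last by (auto simp: rr_def lam_def algebra_simps)
    finally show ?thesis using lhs rhs by simp
  qed
qed (simp add: carrier_matD[OF U_carrier] carrier_matD[OF D_carrier])

lemma D_diag: "diag_in D n (d ` {..<n - 1} \<union> {\<delta>})"
  by (rule diag_by_eigvecs[OF D_carrier U_carrier det_U eig]) (auto simp: lam_def)

end


lemma trace_comm: assumes X: "(X :: 'a::comm_ring_1 mat) \<in> carrier_mat n m" and Y: "Y \<in> carrier_mat m n"
  shows "mat_trace (X * Y) = mat_trace (Y * X)"
proof -
  have "mat_trace (X * Y) = (\<Sum>i<n. \<Sum>k<m. X $$ (i,k) * Y $$ (k,i))"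
    unfolding mat_trace_def using X Y by (auto simp: scalar_prod_def lessThan_atLeast0 intro!: sum.cong)
  also have "\<dots> = (\<Sum>k<m. \<Sum>i<n. Y $$ (k,i) * X $$ (i,k))" by (subst sum.swap) (simp add: mult.commute)
  also have "\<dots> = mat_trace (Y * X)"
    unfolding mat_trace_def using X Y by (auto simp: scalar_prod_def lessThan_atLeast0 intro!: sum.cong)
  finally show ?thesis .
qed

lemma smult_one_mat_vec: assumes w: "(w :: 'a::field vec) \<in> carrier_vec n"
  shows "(c \<cdot>\<^sub>m 1\<^sub>m n) *\<^sub>v w = c \<cdot>\<^sub>v w"
proof (rule eq_vecI)
  fix r assume "r < dim_vec (c \<cdot>\<^sub>v w)"
  then have r: "r < n" using w by simp
  have "((c \<cdot>\<^sub>m 1\<^sub>m n) *\<^sub>v w) $ r = (\<Sum>l<n. (c \<cdot>\<^sub>m 1\<^sub>m n) $$ (r,l) * w $ l)"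
    by (rule mv_entry[OF _ w r]) simp
  also have "\<dots> = (\<Sum>l<n. if l = r then c * w $ r else 0)" using r by (intro sum.cong) auto
  also have "\<dots> = (c \<cdot>\<^sub>v w) $ r" using r w by simp
  finally show "((c \<cdot>\<^sub>m 1\<^sub>m n) *\<^sub>v w) $ r = (c \<cdot>\<^sub>v w) $ r" .
qed (use w in simp)

definition fpol :: "(nat \<Rightarrow> 'a::field) \<Rightarrow> nat \<Rightarrow> 'a poly" where
  "fpol d i = (\<Prod>j<i. [:- d j, 1:])"

lemma fpol_Suc: "fpol d (Suc i) = [:- d i, 1:] * fpol d i"
  unfolding fpol_def by (simp add: mult.commute)

lemma fpol_monic: "monic (fpol d i) \<and> degree (fpol d i) = i"
proof (induct i)
  case 0 then show ?case by (simp add: fpol_def)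
next
  case (Suc i)
  have m1: "monic [:- d i, 1:]" by simp
  have "monic ([:- d i, 1:] * fpol d i)" by (rule monic_mult[OF m1]) (use Suc in blast)
  moreover have "degree ([:- d i, 1:] * fpol d i) = Suc i"
    by (subst degree_mult_eq) (use Suc in auto)
  ultimately show ?case unfolding fpol_Suc by simp
qed

lemma fpol_deg[simp]: "degree (fpol d i) = i" using fpol_monic by blast
lemma fpol_lc[simp]: "coeff (fpol d i) i = 1" using fpol_monic[of d i] fpol_deg[of d i] by metis

lemma comb_poly: fixes c :: "nat \<Rightarrow> 'a::field"
  shows "(\<Sum>i<m. Polynomial.smult (c i) (fpol d i)) = 0 \<Longrightarrow> i < m \<Longrightarrow> c i = 0"
proof (induct m arbitrary: i)
  case 0 then show ?case by simp
next
  case (Suc m)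
  let ?S = "\<Sum>i<m. Polynomial.smult (c i) (fpol d i)"
  have "coeff ?S m = 0"
    by (simp add: coeff_sum) (intro sum.neutral ballI, use fpol_monic in \<open>auto intro!: coeff_eq_0\<close>)
  moreover have "coeff (Polynomial.smult (c m) (fpol d m)) m = c m" using fpol_monic[of d m] by simp
  moreover have "?S + Polynomial.smult (c m) (fpol d m) = 0" using Suc(2) by simp
  ultimately have cm: "c m = 0" by (metis add.left_neutral coeff_add coeff_0)
  then have "?S = 0" using Suc(2) by simp
  then show ?case using Suc cm by (cases "i = m") auto
qed

lemma comb_deg: fixes c :: "nat \<Rightarrow> 'a::field"
  shows "degree (\<Sum>i<m. Polynomial.smult (c i) (fpol d i)) \<le> m - 1"
proof (rule degree_le, intro allI impI)
  fix k assume k: "m - 1 < k"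
  show "coeff (\<Sum>i<m. Polynomial.smult (c i) (fpol d i)) k = 0"
    by (simp add: coeff_sum) (intro sum.neutral ballI, use fpol_monic k in \<open>auto intro!: coeff_eq_0\<close>)
qed

context
  fixes A :: "'a::field mat" and n :: nat and v :: "'a vec" and d :: "nat \<Rightarrow> 'a"
  assumes A: "A \<in> carrier_mat n n" and v: "v \<in> carrier_vec n"
    and cyc: "\<And>g. g \<noteq> 0 \<Longrightarrow> degree g < n \<Longrightarrow> ev A g v \<noteq> 0\<^sub>v n"
begin

definition wv where "wv i = ev A (fpol d i) v"

definition W where "W = mat n n (\<lambda>(r,i). wv i $ r)"

lemma W_carrier[simp]: "W \<in> carrier_mat n n" unfolding W_def by simp

lemma wv_carrier[simp]: "wv i \<in> carrier_vec n" unfolding wv_def using ev_carrier[OF A] by simp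

lemma W_col: assumes i: "i < n" shows "W *\<^sub>v unit_vec n i = wv i"
proof (rule eq_vecI)
  fix r assume "r < dim_vec (wv i)"
  then have r: "r < n" using wv_carrier[of i] by auto
  show "(W *\<^sub>v unit_vec n i) $ r = wv i $ r" using mat_vec_unit_entry[OF W_carrier r i] r i by (simp add: W_def)
qed (simp add: carrier_vecD[OF wv_carrier] carrier_matD[OF W_carrier])

lemma ev_sum: assumes r: "r < n"
  shows "(ev A (\<Sum>i<(m::nat). Polynomial.smult (c i) (p i)) v) $ r = (\<Sum>i<m. c i * (ev A (p i) v) $ r)"
proof (induct m)
  case 0 then show ?case using A r v by (simp add: ev_def[OF A] mev_0[OF A])
next
  case (Suc m)
  have "ev A (\<Sum>i<Suc m. Polynomial.smult (c i) (p i)) v = ev A (\<Sum>i<m. Polynomial.smult (c i) (p i)) v + ev A (Polynomial.smult (c m) (p m)) v"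
    using ev_add[OF A v] by simp
  moreover have "(ev A (Polynomial.smult (c m) (p m)) v) $ r = c m * (ev A (p m) v) $ r"
    unfolding ev_def[OF A] mev_smult[OF A] using A v r by (simp add: scalar_prod_def sum_distrib_left mult.assoc)
  moreover have "dim_vec (ev A g v) = n" for g using ev_carrier[OF A, of g v] by (simp add: carrier_vecD)
  ultimately show ?case using Suc r by simp
qed

lemma det_W: "det W \<noteq> 0"
proof
  assume "det W = 0"
  then obtain c where c: "c \<in> carrier_vec n" "c \<noteq> 0\<^sub>v n" "W *\<^sub>v c = 0\<^sub>v n"
    using det_0_iff_vec_prod_zero_field[OF W_carrier] by auto
  define g where "g = (\<Sum>i<n. Polynomial.smult (c $ i) (fpol d i))"
  have "\<exists>i<n. c $ i \<noteq> 0" using c by (metis eq_vecI carrier_vecD index_zero_vec)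
  then have g0: "g \<noteq> 0" using comb_poly[where c="\<lambda>i. c $ i" and m=n and d=d] unfolding g_def by blast
  then have n0: "n > 0" unfolding g_def by (cases n) auto
  have dg: "degree g < n" unfolding g_def using comb_deg[where c="\<lambda>i. c $ i" and m=n and d=d] n0 by simp
  have "ev A g v = W *\<^sub>v c"
  proof (rule eq_vecI)
    fix r assume "r < dim_vec (W *\<^sub>v c)"
    then have r: "r < n" by (simp add: carrier_matD[OF W_carrier])
    have "(ev A g v) $ r = (\<Sum>i<n. c $ i * (wv i) $ r)" unfolding g_def ev_sum[OF r] wv_def by simp
    also have "\<dots> = (W *\<^sub>v c) $ r" using mv_entry[OF W_carrier c(1) r] r by (simp add: W_def mult.commute)
    finally show "(ev A g v) $ r = (W *\<^sub>v c) $ r" .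
  qed (use ev_carrier[OF A] in \<open>simp add: carrier_matD[OF W_carrier]\<close>)
  then show False using cyc[OF g0 dg] c by simp
qed

definition Winv where "Winv = (SOME B. B \<in> carrier_mat n n \<and> W * B = 1\<^sub>m n \<and> B * W = 1\<^sub>m n)"

lemma Winv: "Winv \<in> carrier_mat n n" "W * Winv = 1\<^sub>m n" "Winv * W = 1\<^sub>m n"
  using someI_ex[OF det_inv[OF W_carrier det_W]] unfolding Winv_def by auto

definition Mm where "Mm = Winv * A * W"

lemma Mm_carrier[simp]: "Mm \<in> carrier_mat n n" unfolding Mm_def by (rule mult_carrier_mat[OF mult_carrier_mat[OF Winv(1) A] W_carrier])

lemma Winv_w: "i < n \<Longrightarrow> Winv *\<^sub>v wv i = unit_vec n i"
proof -
  assume i: "i < n"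
  have "Winv *\<^sub>v wv i = Winv *\<^sub>v (W *\<^sub>v unit_vec n i)" using W_col[OF i] by simp
  also have "\<dots> = (Winv * W) *\<^sub>v unit_vec n i" by (rule assoc_mult_mat_vec[symmetric, OF Winv(1) W_carrier unit_vec_carrier])
  finally show ?thesis using Winv(3) by simp
qed

lemma A_w: "A *\<^sub>v wv i = wv (Suc i) + d i \<cdot>\<^sub>v wv i"
proof -
  have "wv (Suc i) = ev A [:- d i, 1:] (wv i)" unfolding wv_def fpol_Suc ev_mult[OF A v] ..
  also have "\<dots> = ((- d i) \<cdot>\<^sub>m 1\<^sub>m n + A) *\<^sub>v wv i"
  proof -
    have "mev [:- d i, 1:] A = (- d i) \<cdot>\<^sub>m 1\<^sub>m n + 1 \<cdot>\<^sub>m 1\<^sub>m n * A"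
      using mev_pCons[OF A, of "- d i" "[:1:]"] mev_const[OF A, of 1] by simp
    also have "1 \<cdot>\<^sub>m 1\<^sub>m n = (1\<^sub>m n :: 'a mat)" by (intro eq_matI) auto
    also have "1\<^sub>m n * A = A" by (rule left_mult_one_mat[OF A])
    finally show ?thesis by (simp add: ev_def[OF A])
  qed
  also have "\<dots> = (- d i) \<cdot>\<^sub>v wv i + A *\<^sub>v wv i"
    using A by (simp add: add_mult_distrib_mat_vec[of _ n n] smult_one_mat_vec)
  finally have "wv (Suc i) = (- d i) \<cdot>\<^sub>v wv i + A *\<^sub>v wv i" .
  note eq = this
  have dw: "dim_vec (wv i) = n" using wv_carrier[of i] by (simp add: carrier_vecD)
  have dAw: "dim_vec (A *\<^sub>v wv i) = n" using A by simp
  show ?thesis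
  proof (rule eq_vecI)
    fix r assume "r < dim_vec (wv (Suc i) + d i \<cdot>\<^sub>v wv i)"
    then have r: "r < n" using dw by simp
    have 1: "(wv (Suc i) + d i \<cdot>\<^sub>v wv i) $ r = wv (Suc i) $ r + (d i \<cdot>\<^sub>v wv i) $ r"
      by (rule index_add_vec(1)) (simp add: dw r)
    have 2: "wv (Suc i) $ r = ((- d i) \<cdot>\<^sub>v wv i) $ r + (A *\<^sub>v wv i) $ r"
      unfolding eq by (rule index_add_vec(1)) (simp add: carrier_matD[OF A] r)
    have 3: "(c \<cdot>\<^sub>v wv i) $ r = c * wv i $ r" for c by (rule index_smult_vec(1)) (simp add: dw r)
    show "(A *\<^sub>v wv i) $ r = (wv (Suc i) + d i \<cdot>\<^sub>v wv i) $ r"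
      unfolding 1 2 3 by simp
  qed (simp add: dw carrier_matD[OF A])
qed

lemma Mm_col: "Suc i < n \<Longrightarrow> Mm *\<^sub>v unit_vec n i = d i \<cdot>\<^sub>v unit_vec n i + unit_vec n (Suc i)"
proof -
  assume i: "Suc i < n"
  have "Mm *\<^sub>v unit_vec n i = Winv *\<^sub>v (A *\<^sub>v (W *\<^sub>v unit_vec n i))"
    unfolding Mm_def assoc_mult_mat_vec[OF mult_carrier_mat[OF Winv(1) A] W_carrier unit_vec_carrier]
    by (rule assoc_mult_mat_vec[OF Winv(1) A mult_mat_vec_carrier[OF W_carrier unit_vec_carrier]])
  also have "\<dots> = Winv *\<^sub>v (wv (Suc i) + d i \<cdot>\<^sub>v wv i)" using W_col i A_w by simp
  also have "\<dots> = unit_vec n (Suc i) + d i \<cdot>\<^sub>v unit_vec n i"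
    using Winv(1) Winv_w i by (simp add: mult_add_distrib_mat_vec[of _ n n] mult_mat_vec)
  finally show ?thesis using i by (intro eq_vecI) auto
qed

lemma Mm_trace: "mat_trace Mm = mat_trace A"
proof -
  have "mat_trace Mm = mat_trace ((Winv * A) * W)" unfolding Mm_def ..
  also have "\<dots> = mat_trace (W * (Winv * A))" using Winv(1) A by (intro trace_comm) auto
  also have "W * (Winv * A) = (W * Winv) * A" by (rule assoc_mult_mat[symmetric, OF W_carrier Winv(1) A])
  also have "\<dots> = A" using Winv(2) A by simp
  finally show ?thesis .
qed

end


lemma diag_in_mono: "diag_in D n L \<Longrightarrow> L \<subseteq> L' \<Longrightarrow> diag_in D n L'"
  unfolding diag_in_def by blast

lemma conj_mult: assumes P: "P \<in> carrier_mat n n" and Q: "Q \<in> carrier_mat n n"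
  and X: "X \<in> carrier_mat n n" and Y: "(Y :: 'a::comm_ring_1 mat) \<in> carrier_mat n n" and QP: "Q * P = 1\<^sub>m n"
  shows "(P * X * Q) * (P * Y * Q) = P * (X * Y) * Q"
proof -
  have PX: "P * X \<in> carrier_mat n n" and PY: "P * Y \<in> carrier_mat n n" using P X Y by auto
  have PXQ: "P * X * Q \<in> carrier_mat n n" using PX Q by auto
  have "(P * X * Q) * (P * Y * Q) = ((P * X * Q) * (P * Y)) * Q"
    by (rule assoc_mult_mat[OF PXQ PY Q, symmetric])
  also have "(P * X * Q) * (P * Y) = (P * X) * (Q * (P * Y))" by (rule assoc_mult_mat[OF PX Q PY])
  also have "Q * (P * Y) = (Q * P) * Y" by (rule assoc_mult_mat[OF Q P Y, symmetric])
  also have "\<dots> = Y" using QP left_mult_one_mat[OF Y] by simp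
  also have "(P * X) * Y = P * (X * Y)" by (rule assoc_mult_mat[OF P X Y])
  finally show ?thesis .
qed

lemma sum_d: fixes \<theta> \<gamma> :: "'a::field"
  shows "(\<Sum>i<2*j+1. (if i = 0 then \<theta> else if odd i then \<gamma> else 0)) = \<theta> + of_nat j * \<gamma>"
proof (induct j)
  case 0 then show ?case by simp
next
  case (Suc j)
  have "{..<2 * Suc j + 1} = insert (2*j+2) (insert (2*j+1) {..<2*j+1})" by auto
  then show ?case using Suc by (simp add: algebra_simps)
qed

lemma core:
  fixes B :: "'a::field mat" and k :: nat and \<theta> \<gamma> :: 'a
  assumes B: "B \<in> carrier_mat (4*k) (4*k)" and k: "1 \<le> k"
    and v: "v \<in> carrier_vec (4*k)"
    and cyc: "\<And>g. g \<noteq> 0 \<Longrightarrow> degree g < 4*k \<Longrightarrow> ev B g v \<noteq> 0\<^sub>v (4*k)"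
    and two: "(2::'a) = 0"
    and g0: "\<gamma> \<noteq> 0"
    and dn: "mat_trace B + \<theta> + \<gamma> \<notin> {\<theta>, \<gamma>, 0}"
  shows "\<exists>N D. N \<in> carrier_mat (4*k) (4*k) \<and> D \<in> carrier_mat (4*k) (4*k) \<and> B = N + D \<and>
     N * N = 0\<^sub>m (4*k) (4*k) \<and> diag_in D (4*k) {\<theta>, \<gamma>, 0, mat_trace B + \<theta> + \<gamma>}"
proof -
  define n where "n = 4*k"
  define d :: "nat \<Rightarrow> 'a" where "d i = (if i = 0 then \<theta> else if odd i then \<gamma> else 0)" for i
  define \<delta> where "\<delta> = mat_trace B + \<theta> + \<gamma>"
  have Bn: "B \<in> carrier_mat n n" and vn: "v \<in> carrier_vec n" using B v n_def by auto
  have cycn: "\<And>g. g \<noteq> 0 \<Longrightarrow> degree g < n \<Longrightarrow> ev B g v \<noteq> 0\<^sub>v n" using cyc n_def by auto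
  have n2: "2 \<le> n" and ne: "even n" using k n_def by auto
  let ?W = "W B n v d" and ?Wi = "Winv B n v d" and ?M = "Mm B n v d"
  have W: "?W \<in> carrier_mat n n" by (rule W_carrier[OF Bn vn cycn])
  have Wi: "?Wi \<in> carrier_mat n n" "?W * ?Wi = 1\<^sub>m n" "?Wi * ?W = 1\<^sub>m n" using Winv[OF Bn vn cycn] by auto
  have M: "?M \<in> carrier_mat n n" using Mm_carrier[OF Bn vn cycn] .
  have Mcol: "\<And>i. Suc i < n \<Longrightarrow> ?M *\<^sub>v unit_vec n i = d i \<cdot>\<^sub>v unit_vec n i + unit_vec n (Suc i)"
    using Mm_col[OF Bn vn cycn] .
  have Mtr: "mat_trace ?M = mat_trace B" using Mm_trace[OF Bn vn cycn] .
  define \<delta>' where "\<delta>' = ?M $$ (n-1, n-1)"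
  have Mdiag: "?M $$ (i,i) = d i" if i: "Suc i < n" for i
  proof -
    have "?M $$ (i,i) = (?M *\<^sub>v unit_vec n i) $ i" using mat_vec_unit_entry[OF M, of i i] i by simp
    then show ?thesis unfolding Mcol[OF i] using i by simp
  qed
  have "mat_trace ?M = (\<Sum>i<n-1. d i) + \<delta>'"
  proof -
    have "mat_trace ?M = (\<Sum>i<Suc (n-1). ?M $$ (i,i))" unfolding mat_trace_def using M n2 by simp
    also have "\<dots> = (\<Sum>i<n-1. ?M $$ (i,i)) + \<delta>'" unfolding \<delta>'_def by simp
    also have "(\<Sum>i<n-1. ?M $$ (i,i)) = (\<Sum>i<n-1. d i)" using Mdiag by (intro sum.cong) auto
    finally show ?thesis .
  qed
  moreover have "(\<Sum>i<n-1. d i) = \<theta> + \<gamma>"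
  proof -
    have "n - 1 = 2 * (2*k - 1) + 1" using k n_def by simp
    then have "(\<Sum>i<n-1. d i) = \<theta> + of_nat (2*k-1) * \<gamma>" unfolding d_def by (simp only: sum_d)
    moreover have "(of_nat (2*k-1) :: 'a) = 1"
    proof -
      have "2*k-1 = 2*(k-1) + 1" using k by simp
      then have "(of_nat (2*k-1) :: 'a) = 2 * of_nat (k-1) + 1" by simp
      then show ?thesis using two by simp
    qed
    ultimately show ?thesis by simp
  qed
  ultimately have "\<delta>' = mat_trace B - \<theta> - \<gamma>" using Mtr by (simp add: algebra_simps)
  moreover have "\<And>x::'a. - x = x" using two by (metis add_eq_0_iff2 mult_2 mult_zero_left)
  ultimately have dd': "\<delta>' = \<delta>" unfolding \<delta>_def by (metis diff_conv_add_uminus)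
  interpret L: loc ?M n d \<delta>'
  proof
    show "odd i \<Longrightarrow> Suc i < n - 1 \<Longrightarrow> d i \<noteq> d (Suc i)" for i using g0 by (auto simp: d_def)
    show "i < n - 1 \<Longrightarrow> d i \<noteq> \<delta>'" for i using dn dd' unfolding \<delta>_def d_def by auto
  qed (use M n2 ne Mcol \<delta>'_def in auto)
  have Dd: "diag_in L.D n {\<theta>, \<gamma>, 0, \<delta>}"
    by (rule diag_in_mono[OF L.D_diag]) (auto simp: d_def dd')
  define N where "N = ?W * Smat n * ?Wi"
  define D where "D = ?W * L.D * ?Wi"
  have S: "Smat n \<in> carrier_mat n n" by simp
  have LD: "L.D \<in> carrier_mat n n" by simp
  have Nc: "N \<in> carrier_mat n n" unfolding N_def using W S Wi by auto
  have Dc: "D \<in> carrier_mat n n" unfolding D_def using W LD Wi by auto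
  have SD: "Smat n + L.D = ?M" unfolding L.D_def using M by (intro eq_matI) (auto simp: Smat_def)
  have "N + D = ?W * (Smat n + L.D) * ?Wi" unfolding N_def D_def
    unfolding mult_add_distrib_mat[OF W S LD]
    by (rule add_mult_distrib_mat[OF mult_carrier_mat[OF W S] mult_carrier_mat[OF W LD] Wi(1), symmetric])
  also have "\<dots> = ?W * ?M * ?Wi" unfolding SD ..
  also have "\<dots> = ?W * (?Wi * B * ?W) * ?Wi"
  proof -
    have Meq: "?M = ?Wi * B * ?W" by (rule Mm_def[OF Bn vn]) (use cycn in blast)
    show ?thesis by (simp only: Meq)
  qed
  also have "?W * (?Wi * B * ?W) = B * ?W"
  proof -
    have "?W * (?Wi * B * ?W) = ?W * (?Wi * B) * ?W"
      by (rule assoc_mult_mat[OF W mult_carrier_mat[OF Wi(1) Bn] W, symmetric])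
    also have "?W * (?Wi * B) = ?W * ?Wi * B" by (rule assoc_mult_mat[OF W Wi(1) Bn, symmetric])
    finally show ?thesis using Wi(2) left_mult_one_mat[OF Bn] by simp
  qed
  also have "B * ?W * ?Wi = B" using assoc_mult_mat[OF Bn W Wi(1)] Wi(2) right_mult_one_mat[OF Bn] by simp
  finally have BND: "B = N + D" by simp
  have "N * N = ?W * (Smat n * Smat n) * ?Wi" unfolding N_def by (rule conj_mult[OF W Wi(1) S S Wi(3)])
  also have "\<dots> = 0\<^sub>m n n" using W Wi by (simp add: Smat_sq)
  finally have NN: "N * N = 0\<^sub>m n n" .
  have "diag_in D n {\<theta>, \<gamma>, 0, \<delta>}" unfolding D_def by (rule diag_in_sim[OF Dd W Wi])
  then show ?thesis using Nc Dc BND NN n_def \<delta>_def by auto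
qed


theorem proposition2p7:
  fixes B :: "'a::field mat" and k :: nat and a :: 'a
  assumes char2: "CHAR('a) = 2"
    and card4: "infinite (UNIV :: 'a set) \<or> 4 \<le> card (UNIV :: 'a set)"
    and k2: "2 \<le> k"
    and B: "B \<in> carrier_mat (4*k) (4*k)"
    and nd: "non_derogative B"
    and a0: "a \<noteq> 0" and a1: "a \<noteq> 1"
  shows "(mat_trace B \<noteq> 0 \<longrightarrow>
           (\<exists>N D. N \<in> carrier_mat (4*k) (4*k) \<and> D \<in> carrier_mat (4*k) (4*k) \<and>
              B = N + D \<and> N * N = 0\<^sub>m (4*k) (4*k) \<and> diagonalizable D \<and>
              (\<forall>e. eigenvalue D e \<longrightarrow>
                 e \<in> {0, mat_trace B, mat_trace B * a, mat_trace B * (a + 1)})))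
       \<and> (mat_trace B = 0 \<longrightarrow>
           (\<exists>N D. N \<in> carrier_mat (4*k) (4*k) \<and> D \<in> carrier_mat (4*k) (4*k) \<and>
              B = N + D \<and> N * N = 0\<^sub>m (4*k) (4*k) \<and> diagonalizable D \<and>
              (\<forall>e. eigenvalue D e \<longrightarrow> e \<in> {0, 1, a, a + 1})))"
proof -
  have k1: "1 \<le> k" using k2 by simp
  obtain \<mu> where mon: "monic \<mu>" and deg: "degree \<mu> = 4*k" and ann: "mev \<mu> B = 0\<^sub>m (4*k) (4*k)"
    and minim: "\<forall>q. q \<noteq> 0 \<and> mev q B = 0\<^sub>m (4*k) (4*k) \<longrightarrow> 4*k \<le> degree q"
    using min_poly_facts[OF B nd] by blast
  obtain v where v: "v \<in> carrier_vec (4*k)"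
    and cyc: "\<forall>g. g \<noteq> 0 \<and> degree g < 4*k \<longrightarrow> ev B g v \<noteq> 0\<^sub>v (4*k)"
    using cyclic_vec[OF B mon ann deg] minim by blast
  have cyc': "\<And>g. g \<noteq> 0 \<Longrightarrow> degree g < 4*k \<Longrightarrow> ev B g v \<noteq> 0\<^sub>v (4*k)" using cyc by blast
  have two: "(2::'a) = 0" using of_nat_CHAR[where 'a='a] char2 by simp
  have neg: "- x = x" for x :: 'a using two by (metis add_eq_0_iff2 mult_2 mult_zero_left)
  have a1': "a + 1 \<noteq> 0"
  proof
    assume "a + 1 = 0" then have "a = - 1" by (simp add: eq_neg_iff_add_eq_0)
    then show False using a1 neg[of 1] by simp
  qed
  let ?t = "mat_trace B"
  show ?thesis
  proof (intro conjI impI)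
    assume t0: "?t \<noteq> 0"
    have g0: "?t * a \<noteq> 0" using t0 a0 by simp
    have dn: "?t + 0 + ?t * a \<notin> {0, ?t * a, 0}"
    proof -
      have "?t + ?t * a = ?t * (a + 1)" by (simp add: algebra_simps)
      then have "?t + ?t * a \<noteq> 0" using t0 a1' by simp
      moreover have "?t + ?t * a \<noteq> ?t * a" using t0 by simp
      ultimately show ?thesis by simp
    qed
    obtain N D where ND: "N \<in> carrier_mat (4*k) (4*k)" "D \<in> carrier_mat (4*k) (4*k)" "B = N + D"
      "N * N = 0\<^sub>m (4*k) (4*k)" and di: "diag_in D (4*k) {0, ?t * a, 0, ?t + 0 + ?t * a}"
      using core[OF B k1 v cyc' two g0 dn] by blast
    have "\<forall>e. eigenvalue D e \<longrightarrow> e \<in> {0, ?t, ?t * a, ?t * (a + 1)}"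
    proof (intro allI impI)
      fix e assume "eigenvalue D e"
      then have "e \<in> {0, ?t * a, 0, ?t + 0 + ?t * a}" by (rule diag_in_eig[OF di])
      then show "e \<in> {0, ?t, ?t * a, ?t * (a + 1)}" by (auto simp: algebra_simps)
    qed
    then show "\<exists>N D. N \<in> carrier_mat (4*k) (4*k) \<and> D \<in> carrier_mat (4*k) (4*k) \<and>
              B = N + D \<and> N * N = 0\<^sub>m (4*k) (4*k) \<and> diagonalizable D \<and>
              (\<forall>e. eigenvalue D e \<longrightarrow> e \<in> {0, ?t, ?t * a, ?t * (a + 1)})"
      using ND diag_in_diagonalizable[OF di] by blast
  next
    assume t0: "?t = 0"
    have dn: "?t + 1 + a \<notin> {1, a, 0}" using t0 a0 a1' by (auto simp: add.commute)
    obtain N D where ND: "N \<in> carrier_mat (4*k) (4*k)" "D \<in> carrier_mat (4*k) (4*k)" "B = N + D"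
      "N * N = 0\<^sub>m (4*k) (4*k)" and di: "diag_in D (4*k) {1, a, 0, ?t + 1 + a}"
      using core[OF B k1 v cyc' two a0 dn] by blast
    have "\<forall>e. eigenvalue D e \<longrightarrow> e \<in> {0, 1, a, a + 1}"
    proof (intro allI impI)
      fix e assume "eigenvalue D e"
      then have "e \<in> {1, a, 0, ?t + 1 + a}" by (rule diag_in_eig[OF di])
      then show "e \<in> {0, 1, a, a + 1}" using t0 by (auto simp: algebra_simps)
    qed
    then show "\<exists>N D. N \<in> carrier_mat (4*k) (4*k) \<and> D \<in> carrier_mat (4*k) (4*k) \<and>
              B = N + D \<and> N * N = 0\<^sub>m (4*k) (4*k) \<and> diagonalizable D \<and>
              (\<forall>e. eigenvalue D e \<longrightarrow> e \<in> {0, 1, a, a + 1})"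
      using ND diag_in_diagonalizable[OF di] by blast
  qed
qed

end
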